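(* With the notation below, the $\varphi$-Koszul complex $\mathcal{FK}_\bullet(x_1,\ldots,x_n)$ is a (finite) free resolution of $S/I_n$ in the category of left $S[\Theta;\varphi]$-modules, where $I_n=\langle x_1,\ldots,x_n\rangle$; that is, $H_l(\mathcal{FK}_\bullet(x_1,\ldots,x_n))=0$ for all $l\geq 1$ and $H_0(\mathcal{FK}_\bullet(x_1,\ldots,x_n))\cong S/I_n$ as left $S[\Theta;\varphi]$-modules.
   Context: Let $\mathbb{K}$ be a commutative ring and $S=\mathbb{K}[x_1,\ldots,x_n]$. Let $\varphi:S\to S$ be a flat $\mathbb{K}$-algebra endomorphism with $\varphi(x_i)\in\langle x_i\rangle$ for each $i$, and fix nonzero $s_1,\ldots,s_n\in S$ with $\varphi(x_i)=s_ix_i$. The left skew polynomial ring $S[\Theta;\varphi]$ is the ring which is a free left $S$-module with basis $\{\Theta^i\}_{i\geq0}$ and multiplication determined by $\Theta a=\varphi(a)\Theta$ for $a\in S$. $S/I_n$ is a left $S[\Theta;\varphi]$-module with $S$ acting naturally and $\Theta$ acting by the map induced by $\varphi$ (well defined since $\varphi(I_n)\subseteq I_n$). For $J=\{j_1<\cdots<j_k\}\subseteq\{1,\ldots,n\}$ write $s_J=s_{j_1}\cdots s_{j_k}$ (with $s_\emptyset=1$) and $\mathbf{e}_J=\mathbf{e}_{j_1}\wedge\cdots\wedge\mathbf{e}_{j_k}$. The $\varphi$-Koszul complex $\mathcal{FK}_\bullet(x_1,\ldots,x_n)$ is defined as follows: for $0\leq l\leq n+1$, $\mathcal{FK}_l$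 is the free left $S[\Theta;\varphi]$-module with basis $\{\mathbf{e}_I : |I|=l\}\cup\{\mathbf{e}_J\wedge u : |J|=l-1\}$ (so $\mathcal{FK}_0=S[\Theta;\varphi]$ with basis $\mathbf{e}_\emptyset$, and $\mathcal{FK}_{n+1}$ has the single basis element $\mathbf{e}_{\{1,\ldots,n\}}\wedge u$), and $\partial_l:\mathcal{FK}_l\to\mathcal{FK}_{l-1}$ ($1\le l\le n+1$; $\partial_0=\partial_{n+2}=0$) is the left $S[\Theta;\varphi]$-linear map given on basis elements by $\partial_l(\mathbf{e}_I)=\sum_{r=1}^{l}(-1)^{r-1}x_{i_r}\,\mathbf{e}_{I\setminus\{i_r\}}$ for $I=\{i_1<\cdots<i_l\}$, and $\partial_l(\mathbf{e}_J\wedge u)=(-1)^{l-1}(\Theta-s_J)\,\mathbf{e}_J+\sum_{r=1}^{l-1}(-1)^{r-1}\varphi(x_{j_r})\,\mathbf{e}_{J\setminus\{j_r\}}\wedge u$ for $J=\{j_1<\cdots<j_{l-1}\}$ (in particular $\partial_1(u)=\Theta-1$). *)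

theory Defs
  imports Main "HOL-Library.Poly_Mapping"
begin

text \<open>The polynomial ring S = K[x_i : i in 'n] over a commutative ring K, with the
 variables indexed by a finite linearly ordered type 'n (so n = CARD('n)),
 represented as finitely supported maps from monomials to coefficients.\<close>

type_synonym ('n, 'k) mpoly = "('n \<Rightarrow>\<^sub>0 nat) \<Rightarrow>\<^sub>0 'k"

definition Var :: "'n \<Rightarrow> ('n, 'k::comm_ring_1) mpoly" where
  "Var i = Poly_Mapping.single (Poly_Mapping.single i 1) 1"

definition Const :: "'k \<Rightarrow> ('n, 'k::comm_ring_1) mpoly" where
  "Const c = Poly_Mapping.single 0 c"

definition alg_endo :: "(('n, 'k::comm_ring_1) mpoly \<Rightarrow> ('n, 'k) mpoly) \<Rightarrow> bool" where
  "alg_endo \<phi> \<longleftrightarrow> (\<forall>p q. \<phi> (p + q) = \<phi> p + \<phi> q) \<and> (\<forall>p q. \<phi> (p * q) = \<phi> p * \<phi> q)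
     \<and> \<phi> 1 = 1 \<and> (\<forall>c. \<phi> (Const c) = Const c)"

text \<open>Flatness of S regarded as an S-module via phi (r . m = phi r * m),
 stated via the equational criterion for flatness.\<close>
definition flat_endo :: "('a::comm_ring_1 \<Rightarrow> 'a) \<Rightarrow> bool" where
  "flat_endo \<phi> \<longleftrightarrow> (\<forall>(m::nat) (f::nat \<Rightarrow> 'a) (g::nat \<Rightarrow> 'a).
      (\<Sum>i<m. \<phi> (f i) * g i) = 0 \<longrightarrow>
      (\<exists>(k::nat) (a::nat \<Rightarrow> nat \<Rightarrow> 'a) (h::nat \<Rightarrow> 'a).
         (\<forall>i<m. g i = (\<Sum>j<k. \<phi> (a i j) * h j)) \<and>
         (\<forall>j<k. (\<Sum>i<m. f i * a i j) = 0)))"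

text \<open>The skew polynomial ring S[Theta; phi]: elements are finitely supported maps
 nat => S (coefficient of Theta^i, written on the left); multiplication is
 (a Theta^i)(b Theta^j) = a phi^i(b) Theta^(i+j).  NB: the built-in * on
 nat =>0 S is the commutative one and is NOT used.\<close>
type_synonym ('n, 'k) skew = "nat \<Rightarrow>\<^sub>0 ('n, 'k) mpoly"

definition skmult :: "(('n, 'k::comm_ring_1) mpoly \<Rightarrow> ('n, 'k) mpoly) \<Rightarrow>
    ('n, 'k) skew \<Rightarrow> ('n, 'k) skew \<Rightarrow> ('n, 'k) skew" where
  "skmult \<phi> f g = (\<Sum>i\<in>Poly_Mapping.keys f. \<Sum>j\<in>Poly_Mapping.keys g.
      Poly_Mapping.single (i + j) (Poly_Mapping.lookup f i * (\<phi> ^^ i) (Poly_Mapping.lookup g j)))"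

definition emb :: "('n, 'k::comm_ring_1) mpoly \<Rightarrow> ('n, 'k) skew" where
  "emb a = Poly_Mapping.single 0 a"

definition Theta :: "('n, 'k::comm_ring_1) skew" where
  "Theta = Poly_Mapping.single 1 1"

text \<open>Action of S[Theta;phi] on S (descending to S/I_n).\<close>
definition act :: "(('n, 'k::comm_ring_1) mpoly \<Rightarrow> ('n, 'k) mpoly) \<Rightarrow>
    ('n, 'k) skew \<Rightarrow> ('n, 'k) mpoly \<Rightarrow> ('n, 'k) mpoly" where
  "act \<phi> r a = (\<Sum>i\<in>Poly_Mapping.keys r. Poly_Mapping.lookup r i * (\<phi> ^^ i) a)"

definition in_In :: "('n::finite, 'k::comm_ring_1) mpoly \<Rightarrow> bool" where
  "in_In p \<longleftrightarrow> (\<exists>c :: 'n \<Rightarrow> ('n, 'k) mpoly. p = (\<Sum>i\<in>UNIV. c i * Var i))"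

text \<open>Basis elements of the phi-Koszul complex: (I, False) is e_I, (J, True) is e_J /\ u.\<close>
definition kdeg :: "'n set \<times> bool \<Rightarrow> nat" where
  "kdeg B = card (fst B) + (if snd B then 1 else 0)"

text \<open>Sign (-1)^(r-1) where i is the r-th smallest element of I.\<close>
definition pos_sign :: "'n::linorder set \<Rightarrow> 'n \<Rightarrow> ('n, 'k::comm_ring_1) mpoly" where
  "pos_sign I i = (-1) ^ card {j\<in>I. j < i}"

text \<open>bd phi s B B' = coefficient of basis element B' in the boundary of B.\<close>
fun bd :: "(('n::{finite,linorder}, 'k::comm_ring_1) mpoly \<Rightarrow> ('n, 'k) mpoly) \<Rightarrow>
    ('n \<Rightarrow> ('n, 'k) mpoly) \<Rightarrow> 'n set \<times> bool \<Rightarrow> 'n set \<times> bool \<Rightarrow> ('n, 'k) skew" where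
  "bd \<phi> s (I, False) (I', b') =
     (if b' then 0 else
        (\<Sum>i\<in>I. if I' = I - {i} then emb (pos_sign I i * Var i) else 0))"
| "bd \<phi> s (J, True) (J', b') =
     (if b' then
        (\<Sum>j\<in>J. if J' = J - {j} then emb (pos_sign J j * \<phi> (Var j)) else 0)
      else if J' = J then
        (if even (card J) then Theta - emb (\<Prod>j\<in>J. s j)
         else - (Theta - emb (\<Prod>j\<in>J. s j)))
      else 0)"

text \<open>Chains: elements of the free module with basis all B; those of degree l
 form FK_l.  The differential is extended left-S[Theta;phi]-linearly.\<close>
definition chain_in :: "nat \<Rightarrow> ('n set \<times> bool \<Rightarrow> ('n, 'k::comm_ring_1) skew) \<Rightarrow> bool" where
  "chain_in l c \<longleftrightarrow> (\<forall>B. kdeg B \<noteq> l \<longrightarrow> c B = 0)"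

definition dd :: "(('n::{finite,linorder}, 'k::comm_ring_1) mpoly \<Rightarrow> ('n, 'k) mpoly) \<Rightarrow>
    ('n \<Rightarrow> ('n, 'k) mpoly) \<Rightarrow> ('n set \<times> bool \<Rightarrow> ('n, 'k) skew) \<Rightarrow> ('n set \<times> bool \<Rightarrow> ('n, 'k) skew)" where
  "dd \<phi> s c = (\<lambda>B'. \<Sum>B\<in>UNIV. skmult \<phi> (c B) (bd \<phi> s B B'))"

end

theory Submission
  imports Defs
begin

abbreviation ee :: "'n \<Rightarrow> ('n \<Rightarrow>\<^sub>0 nat)" where "ee i \<equiv> Poly_Mapping.single i 1"

lemma lookup_Var_mult:
  "Poly_Mapping.lookup (Var i * (p::('n,'k::comm_ring_1) mpoly)) \<alpha> =
     (if 1 \<le> Poly_Mapping.lookup \<alpha> i then Poly_Mapping.lookup p (\<alpha> - ee i) else 0)"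
proof -
  have eq: "(\<alpha> = ee i + q) \<longleftrightarrow> (1 \<le> Poly_Mapping.lookup \<alpha> i \<and> q = \<alpha> - ee i)" for q
  proof
    assume "\<alpha> = ee i + q" thus "1 \<le> Poly_Mapping.lookup \<alpha> i \<and> q = \<alpha> - ee i"
      by (simp add: lookup_add)
  next
    assume h: "1 \<le> Poly_Mapping.lookup \<alpha> i \<and> q = \<alpha> - ee i"
    show "\<alpha> = ee i + q"
      by (rule poly_mapping_eqI) (use h in \<open>auto simp: lookup_add lookup_minus lookup_single when_def\<close>)
  qed
  have "Poly_Mapping.lookup (Var i * p) \<alpha> =
     (\<Sum>l. Poly_Mapping.lookup (Var i) l * (\<Sum>q. Poly_Mapping.lookup p q when \<alpha> = l + q))"
    by (rule lookup_mult)
  also have "\<dots> = (\<Sum>l. ((\<Sum>q. Poly_Mapping.lookup p q when \<alpha> = l + q) when ee i = l))"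
    by (simp add: Var_def lookup_single when_mult)
  also have "\<dots> = (\<Sum>q. Poly_Mapping.lookup p q when \<alpha> = ee i + q)"
    by simp
  also have "\<dots> = (\<Sum>q. Poly_Mapping.lookup p q when (1 \<le> Poly_Mapping.lookup \<alpha> i \<and> q = \<alpha> - ee i))"
    by (simp only: eq)
  also have "\<dots> = (if 1 \<le> Poly_Mapping.lookup \<alpha> i then Poly_Mapping.lookup p (\<alpha> - ee i) else 0)"
    by (cases "1 \<le> Poly_Mapping.lookup \<alpha> i") (simp_all add: when_def)
  finally show ?thesis .
qed

lemma lookup_neg1_pow_mult:
  "Poly_Mapping.lookup ((-1) ^ n * (p::('n,'k::comm_ring_1) mpoly)) \<alpha> = (-1) ^ n * Poly_Mapping.lookup p \<alpha>"
  by (induction n) (simp_all add: mult.assoc)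

definition sg :: "'n::linorder \<Rightarrow> 'n set \<Rightarrow> 'k::comm_ring_1" where
  "sg i I = (-1) ^ card {j\<in>I. j < i}"

lemma lookup_pos_sign_mult:
  "Poly_Mapping.lookup (pos_sign I i * (p::('n::linorder,'k::comm_ring_1) mpoly)) \<alpha> = sg i I * Poly_Mapping.lookup p \<alpha>"
  by (simp add: pos_sign_def sg_def lookup_neg1_pow_mult)

definition kd :: "('n::{finite,linorder} \<Rightarrow> ('n,'k::comm_ring_1) mpoly) \<Rightarrow> ('n set \<Rightarrow> ('n,'k) mpoly) \<Rightarrow> 'n set \<Rightarrow> ('n,'k) mpoly" where
  "kd y z I = (\<Sum>i\<in>-I. pos_sign (insert i I) i * y i * z (insert i I))"

lemma lookup_kd_Var:
  "Poly_Mapping.lookup (kd Var z I) \<alpha> = (\<Sum>i\<in>-I. sg i (insert i I) *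
      (if 1 \<le> Poly_Mapping.lookup \<alpha> i then Poly_Mapping.lookup (z (insert i I)) (\<alpha> - ee i) else 0))"
  unfolding kd_def lookup_sum
  by (rule sum.cong) (simp_all add: mult.assoc lookup_pos_sign_mult lookup_Var_mult)

definition hmt :: "('n::{finite,linorder} set \<Rightarrow> ('n,'k::comm_ring_1) mpoly) \<Rightarrow> 'n set \<Rightarrow> ('n,'k) mpoly" where
  "hmt z J = (if J = {} then 0 else Abs_poly_mapping (\<lambda>\<alpha>. if (\<forall>j\<in>Poly_Mapping.keys \<alpha>. Min J \<le> j)
       then Poly_Mapping.lookup (z (J - {Min J})) (\<alpha> + ee (Min J)) else 0))"

lemma lookup_hmt:
  "Poly_Mapping.lookup (hmt z J) \<alpha> = (if J = {} then 0 else if (\<forall>j\<in>Poly_Mapping.keys \<alpha>. Min J \<le> j)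
       then Poly_Mapping.lookup (z (J - {Min J})) (\<alpha> + ee (Min J)) else 0)"
proof (cases "J = {}")
  case True thus ?thesis by (simp add: hmt_def)
next
  case False
  let ?f = "(\<lambda>\<alpha>. if (\<forall>j\<in>Poly_Mapping.keys \<alpha>. Min J \<le> j)
       then Poly_Mapping.lookup (z (J - {Min J})) (\<alpha> + ee (Min J)) else 0)"
  have "{\<alpha>. ?f \<alpha> \<noteq> 0} \<subseteq> (\<lambda>\<beta>. \<beta> - ee (Min J)) ` Poly_Mapping.keys (z (J - {Min J}))"
  proof
    fix \<alpha> assume "\<alpha> \<in> {\<alpha>. ?f \<alpha> \<noteq> 0}"
    hence "\<alpha> + ee (Min J) \<in> Poly_Mapping.keys (z (J - {Min J}))"
      by (auto simp: in_keys_iff split: if_splits)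
    moreover have "\<alpha> = (\<alpha> + ee (Min J)) - ee (Min J)" by simp
    ultimately show "\<alpha> \<in> (\<lambda>\<beta>. \<beta> - ee (Min J)) ` Poly_Mapping.keys (z (J - {Min J}))" by blast
  qed
  hence fin: "finite {\<alpha>. ?f \<alpha> \<noteq> 0}" by (rule finite_subset) simp
  have "hmt z J = Abs_poly_mapping ?f" using False by (simp only: hmt_def if_False)
  hence "Poly_Mapping.lookup (hmt z J) = ?f" using lookup_Abs_poly_mapping[OF fin] by simp
  thus ?thesis using False by simp
qed

lemma card_less_insert:
  assumes "m \<in> J" "m < i" "i \<notin> J"
  shows "card {j\<in>insert i (J::'n::{finite,linorder} set). j < i} = Suc (card {j\<in>insert i (J - {m}). j < i})"
proof -
  have e1: "{j\<in>insert i J. j < i} = {j\<in>J. j < i}" by auto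
  have e2: "{j\<in>insert i (J - {m}). j < i} = {j\<in>J. j < i} - {m}" by auto
  have "m \<in> {j\<in>J. j < i}" using assms by auto
  hence "card {j\<in>J. j < i} = Suc (card ({j\<in>J. j < i} - {m}))"
    by (metis card_Suc_Diff1 finite)
  thus ?thesis using e1 e2 by simp
qed

lemma sg_flip:
  assumes "m \<in> J" "m < i" "i \<notin> J"
  shows "sg i (insert i (J::'n::{finite,linorder} set)) = - (sg i (insert i (J - {m})) :: 'k::comm_ring_1)"
  using card_less_insert[OF assms] by (simp add: sg_def)

lemma sg_min:
  assumes "\<forall>j\<in>J. m \<le> j"
  shows "sg m (J::'n::{finite,linorder} set) = (1::'k::comm_ring_1)"
proof -
  have "{j\<in>J. j < m} = {}" using assms by auto
  thus ?thesis unfolding sg_def by (simp only: card.empty power_0)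
qed

lemma keys_minus_ee: "Poly_Mapping.keys (\<alpha> - ee i) \<subseteq> Poly_Mapping.keys \<alpha>"
  by (auto simp: in_keys_iff lookup_minus)

lemma hmt_identity:
  fixes z :: "'n::{finite,linorder} set \<Rightarrow> ('n,'k::comm_ring_1) mpoly"
  shows "Poly_Mapping.lookup (kd Var (hmt z) J) \<alpha> + Poly_Mapping.lookup (hmt (kd Var z) J) \<alpha>
     = (if J = {} \<and> \<alpha> = 0 then 0 else Poly_Mapping.lookup (z J) \<alpha>)"
proof (cases "J \<noteq> {} \<and> (\<forall>j\<in>Poly_Mapping.keys \<alpha>. Min J \<le> j)")
  case True
  define m where "m = Min J"
  have mJ: "m \<in> J" using True by (simp add: m_def)
  have mle: "\<forall>j\<in>J. m \<le> j" by (simp add: m_def)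
  have ma: "\<forall>j\<in>Poly_Mapping.keys \<alpha>. m \<le> j" using True by (simp add: m_def)
  define T1 where "T1 = (\<lambda>i. sg i (insert i J) *
      (if 1 \<le> Poly_Mapping.lookup \<alpha> i then Poly_Mapping.lookup (hmt z (insert i J)) (\<alpha> - ee i) else (0::'k)))"
  define T2 where "T2 = (\<lambda>i. sg i (insert i (J - {m})) *
      (if 1 \<le> Poly_Mapping.lookup (\<alpha> + ee m) i then Poly_Mapping.lookup (z (insert i (J - {m}))) (\<alpha> + ee m - ee i) else (0::'k)))"
  have L1: "Poly_Mapping.lookup (kd Var (hmt z) J) \<alpha> = (\<Sum>i\<in>-J. T1 i)"
    by (simp add: lookup_kd_Var T1_def)
  have L2: "Poly_Mapping.lookup (hmt (kd Var z) J) \<alpha> = (\<Sum>i\<in>-(J - {m}). T2 i)"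
  proof -
    have "Poly_Mapping.lookup (hmt (kd Var z) J) \<alpha> = Poly_Mapping.lookup (kd Var z (J - {m})) (\<alpha> + ee m)"
      using True unfolding lookup_hmt m_def[symmetric] by simp
    also have "\<dots> = (\<Sum>i\<in>-(J - {m}). T2 i)" unfolding lookup_kd_Var T2_def ..
    finally show ?thesis .
  qed
  have "-(J - {m}) = insert m (-J)" using mJ by auto
  hence L2': "(\<Sum>i\<in>-(J - {m}). T2 i) = T2 m + (\<Sum>i\<in>-J. T2 i)"
    using mJ by simp
  have ins: "insert m (J - {m}) = J" using mJ by auto
  have sgm: "sg m J = (1::'k)" using mle by (rule sg_min)
  have T2m: "T2 m = Poly_Mapping.lookup (z J) \<alpha>"
  proof -
    have "1 \<le> Poly_Mapping.lookup (\<alpha> + ee m) m" by (simp add: lookup_add)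
    hence "T2 m = sg m (insert m (J - {m})) * Poly_Mapping.lookup (z (insert m (J - {m}))) (\<alpha> + ee m - ee m)"
      unfolding T2_def by (simp only: if_True)
    also have "\<dots> = Poly_Mapping.lookup (z J) \<alpha>" unfolding ins sgm by simp
    finally show ?thesis .
  qed
  have T12: "T1 i + T2 i = 0" if i: "i \<in> -J" for i
  proof (cases "1 \<le> Poly_Mapping.lookup \<alpha> i")
    case False
    have "i \<noteq> m" using i mJ by auto
    hence "Poly_Mapping.lookup (\<alpha> + ee m) i = Poly_Mapping.lookup \<alpha> i" by (simp add: lookup_add lookup_single)
    thus ?thesis using False by (simp add: T1_def T2_def)
  next
    case c: True
    have "i \<in> Poly_Mapping.keys \<alpha>" using c by (simp add: in_keys_iff)
    hence "m \<le> i" using ma by auto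
    moreover have "i \<noteq> m" using i mJ by auto
    ultimately have mi: "m < i" by simp
    have Mins: "Min (insert i J) = m"
      using True mi by (simp add: Min_insert m_def)
    have k: "\<forall>j\<in>Poly_Mapping.keys (\<alpha> - ee i). m \<le> j" using ma keys_minus_ee[of \<alpha> i] by blast
    have set_eq: "insert i J - {m} = insert i (J - {m})" using mi by auto
    have mon_eq: "\<alpha> - ee i + ee m = \<alpha> + ee m - ee i"
      by (rule poly_mapping_eqI) (use c mi in \<open>auto simp: lookup_add lookup_minus lookup_single when_def\<close>)
    have la: "Poly_Mapping.lookup (\<alpha> + ee m) i = Poly_Mapping.lookup \<alpha> i"
      using mi by (simp add: lookup_add lookup_single)
    have "T1 i = sg i (insert i J) * Poly_Mapping.lookup (z (insert i (J - {m}))) (\<alpha> + ee m - ee i)"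
      using c k by (simp add: T1_def lookup_hmt Mins set_eq mon_eq[simplified])
    moreover have "T2 i = sg i (insert i (J - {m})) * Poly_Mapping.lookup (z (insert i (J - {m}))) (\<alpha> + ee m - ee i)"
      using c by (simp add: T2_def la[simplified])
    moreover have "sg i (insert i J) = - (sg i (insert i (J - {m})) :: 'k)"
      by (rule sg_flip) (use mJ mi i in auto)
    ultimately show ?thesis by simp
  qed
  have "(\<Sum>i\<in>-J. T1 i) + (\<Sum>i\<in>-J. T2 i) = 0"
    using T12 by (simp add: sum.distrib[symmetric])
  thus ?thesis using L1 L2 L2' T2m True by (simp add: algebra_simps)
next
  case False
  have L2: "Poly_Mapping.lookup (hmt (kd Var z) J) \<alpha> = 0"
    using False by (auto simp: lookup_hmt)
  show ?thesis
  proof (cases "\<alpha> = 0")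
    case True
    hence "J = {}" using False by auto
    thus ?thesis using True L2 by (simp add: lookup_kd_Var)
  next
    case anz: False
    define m0 where "m0 = Min (Poly_Mapping.keys \<alpha>)"
    have kne: "Poly_Mapping.keys \<alpha> \<noteq> {}" using anz by simp
    have m0k: "m0 \<in> Poly_Mapping.keys \<alpha>" using kne by (simp add: m0_def)
    have m0le: "\<forall>j\<in>Poly_Mapping.keys \<alpha>. m0 \<le> j" by (simp add: m0_def)
    have m0J: "\<forall>j\<in>J. m0 < j"
    proof
      fix j assume jJ: "j \<in> J"
      hence "J \<noteq> {}" by auto
      then obtain j' where "j' \<in> Poly_Mapping.keys \<alpha>" "\<not> Min J \<le> j'" using False by auto
      moreover have "Min J \<le> j" using jJ by simp
      ultimately show "m0 < j" using m0le by force
    qed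
    hence m0nJ: "m0 \<in> -J" by auto
    define T1 where "T1 = (\<lambda>i. sg i (insert i J) *
      (if 1 \<le> Poly_Mapping.lookup \<alpha> i then Poly_Mapping.lookup (hmt z (insert i J)) (\<alpha> - ee i) else (0::'k)))"
    have L1: "Poly_Mapping.lookup (kd Var (hmt z) J) \<alpha> = (\<Sum>i\<in>-J. T1 i)"
      by (simp add: lookup_kd_Var T1_def)
    have "(\<Sum>i\<in>-J. T1 i) = T1 m0 + (\<Sum>i\<in>-J - {m0}. T1 i)"
      using m0nJ by (simp add: sum.remove)
    moreover have "(\<Sum>i\<in>-J - {m0}. T1 i) = 0"
    proof (rule sum.neutral, rule ballI)
      fix i assume i: "i \<in> -J - {m0}"
      show "T1 i = 0"
      proof (cases "1 \<le> Poly_Mapping.lookup \<alpha> i")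
        case False thus ?thesis by (simp add: T1_def)
      next
        case True
        hence "i \<in> Poly_Mapping.keys \<alpha>" by (simp add: in_keys_iff)
        hence mi: "m0 < i" using m0le i by force
        have "Min (insert i J) > m0"
        proof (cases "J = {}")
          case True thus ?thesis using mi by simp
        next
          case False
          have "Min J > m0" using False m0J by simp
          thus ?thesis using False mi by (simp add: Min_insert)
        qed
        moreover have "m0 \<in> Poly_Mapping.keys (\<alpha> - ee i)"
          using m0k mi by (simp add: in_keys_iff lookup_minus lookup_single)
        ultimately have "\<not> (\<forall>j\<in>Poly_Mapping.keys (\<alpha> - ee i). Min (insert i J) \<le> j)" using leD by blast
        thus ?thesis by (auto simp: T1_def lookup_hmt)
      qed
    qed
    moreover have "T1 m0 = Poly_Mapping.lookup (z J) \<alpha>"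
    proof -
      have c: "1 \<le> Poly_Mapping.lookup \<alpha> m0" using m0k by (simp add: in_keys_iff)
      have Mins: "Min (insert m0 J) = m0"
        using m0J by (cases "J = {}") (auto simp: Min_insert min_def)
      have k: "\<forall>j\<in>Poly_Mapping.keys (\<alpha> - ee m0). m0 \<le> j" using m0le keys_minus_ee[of \<alpha> m0] by blast
      have se: "insert m0 J - {m0} = J" using m0nJ by auto
      have me: "\<alpha> - ee m0 + ee m0 = \<alpha>"
        by (rule poly_mapping_eqI) (use c in \<open>auto simp: lookup_add lookup_minus lookup_single when_def\<close>)
      have "sg m0 (insert m0 J) = (1::'k)" using m0J by (intro sg_min) auto
      thus ?thesis using c k by (simp add: T1_def lookup_hmt Mins se me[simplified])
    qed
    ultimately show ?thesis using L1 L2 anz by simp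
  qed
qed

section \<open>Algebra endomorphisms\<close>

context
  fixes f :: "('n::linorder, 'k::comm_ring_1) mpoly \<Rightarrow> ('n, 'k) mpoly"
  assumes ae: "alg_endo f"
begin
lemma ae_add: "f (p + q) = f p + f q" using ae by (simp add: alg_endo_def)
lemma ae_mult: "f (p * q) = f p * f q" using ae by (simp add: alg_endo_def)
lemma ae_one: "f 1 = 1" using ae by (simp add: alg_endo_def)
lemma ae_zero: "f 0 = 0"
proof -
  have "f (0 + 0) = f 0 + f 0" by (rule ae_add)
  thus ?thesis by simp
qed
lemma ae_uminus: "f (- p) = - f p"
proof -
  have "f (p + - p) = f p + f (- p)" by (rule ae_add)
  hence "f p + f (- p) = 0" using ae_zero by simp
  thus ?thesis by (simp add: add_eq_0_iff)
qed
lemma ae_diff: "f (p - q) = f p - f q"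
  using ae_add[of p "- q"] ae_uminus[of q] by simp
lemma ae_sum: "f (sum g A) = sum (\<lambda>x. f (g x)) A"
  by (induction A rule: infinite_finite_induct) (simp_all add: ae_zero ae_add)
lemma ae_prod: "f (prod g A) = prod (\<lambda>x. f (g x)) A"
  by (induction A rule: infinite_finite_induct) (simp_all add: ae_one ae_mult)
lemma ae_power: "f (p ^ n) = f p ^ n"
  by (induction n) (simp_all add: ae_one ae_mult)
lemma ae_neg1_pow: "f ((-1) ^ n) = (-1) ^ n"
  by (simp add: ae_power ae_uminus ae_one)
lemma ae_pos_sign: "f (pos_sign I i) = pos_sign I i"
  by (simp add: pos_sign_def ae_neg1_pow)
end

lemma alg_endo_funpow: "alg_endo f \<Longrightarrow> alg_endo (f ^^ k)"
  by (induction k) (simp_all add: alg_endo_def)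

section \<open>Flatness for systems\<close>

lemma flat_sys:
  fixes \<phi> :: "('n::linorder, 'k::comm_ring_1) mpoly \<Rightarrow> ('n, 'k) mpoly"
    and R m :: nat and M :: "nat \<Rightarrow> nat \<Rightarrow> ('n, 'k) mpoly" and g :: "nat \<Rightarrow> ('n, 'k) mpoly"
  assumes ae: "alg_endo \<phi>" and fl: "flat_endo \<phi>"
  shows "(\<forall>r<R. (\<Sum>i<m. \<phi> (M r i) * g i) = 0) \<Longrightarrow>
     \<exists>(k::nat) a h. (\<forall>i<m. g i = (\<Sum>j<k. \<phi> (a i j) * h j)) \<and> (\<forall>r<R. \<forall>j<k. (\<Sum>i<m. M r i * a i j) = 0)"
proof (induction R)
  case 0
  have "g i = (\<Sum>j<m. \<phi> (if i = j then 1 else 0) * g j)" if "i < m" for i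
  proof -
    have "(\<Sum>j<m. \<phi> (if i = j then 1 else 0) * g j) = (\<Sum>j<m. if i = j then g j else 0)"
      by (rule sum.cong) (simp_all add: ae_one[OF ae] ae_zero[OF ae])
    also have "\<dots> = g i" using that by simp
    finally show ?thesis by simp
  qed
  note * = this
  define d :: "nat \<Rightarrow> nat \<Rightarrow> ('n,'k) mpoly" where "d = (\<lambda>i j. if i = j then 1 else 0)"
  have d1: "\<forall>i<m. g i = (\<Sum>j<m. \<phi> (d i j) * g j)" using * by (simp add: d_def)
  have d2: "\<forall>r<(0::nat). \<forall>j<m. (\<Sum>i<m. M r i * d i j) = 0" by simp
  show ?case
    using d1 d2 by blast
next
  case (Suc R)
  have "\<forall>r<R. (\<Sum>i<m. \<phi> (M r i) * g i) = 0" using Suc.prems by simp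
  from Suc.IH[OF this] obtain k :: nat and a h where g: "\<forall>i<m. g i = (\<Sum>j<k. \<phi> (a i j) * h j)"
    and z: "\<forall>r<R. \<forall>j<k. (\<Sum>i<m. M r i * a i j) = 0" by blast
  define c where "c = (\<lambda>j. \<Sum>i<m. M R i * a i j)"
  have "0 = (\<Sum>i<m. \<phi> (M R i) * g i)" using Suc.prems by simp
  also have "\<dots> = (\<Sum>i<m. \<phi> (M R i) * (\<Sum>j<k. \<phi> (a i j) * h j))"
    using g by simp
  also have "\<dots> = (\<Sum>i<m. \<Sum>j<k. \<phi> (M R i) * \<phi> (a i j) * h j)"
    by (simp add: sum_distrib_left mult.assoc)
  also have "\<dots> = (\<Sum>j<k. \<Sum>i<m. \<phi> (M R i * a i j) * h j)"
    by (subst sum.swap) (simp add: ae_mult[OF ae])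
  also have "\<dots> = (\<Sum>j<k. \<phi> (c j) * h j)"
    by (simp add: c_def ae_sum[OF ae] sum_distrib_right)
  finally have "(\<Sum>j<k. \<phi> (c j) * h j) = 0" by simp
  then obtain k' :: nat and b h' where h: "\<forall>j<k. h j = (\<Sum>t<k'. \<phi> (b j t) * h' t)"
    and zb: "\<forall>t<k'. (\<Sum>j<k. c j * b j t) = 0"
    using fl unfolding flat_endo_def by blast
  define a' where "a' = (\<lambda>i t. \<Sum>j<k. a i j * b j t)"
  have "g i = (\<Sum>t<k'. \<phi> (a' i t) * h' t)" if "i < m" for i
  proof -
    have "g i = (\<Sum>j<k. \<phi> (a i j) * (\<Sum>t<k'. \<phi> (b j t) * h' t))" using g h that by simp
    also have "\<dots> = (\<Sum>j<k. \<Sum>t<k'. \<phi> (a i j * b j t) * h' t)"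
      by (simp add: sum_distrib_left mult.assoc ae_mult[OF ae])
    also have "\<dots> = (\<Sum>t<k'. \<phi> (a' i t) * h' t)"
      by (subst sum.swap) (simp add: a'_def ae_sum[OF ae] sum_distrib_right)
    finally show ?thesis .
  qed
  moreover have "(\<Sum>i<m. M r i * a' i t) = 0" if "r < Suc R" "t < k'" for r t
  proof -
    have "(\<Sum>i<m. M r i * a' i t) = (\<Sum>j<k. (\<Sum>i<m. M r i * a i j) * b j t)"
      by (simp add: a'_def sum_distrib_left sum_distrib_right mult.assoc) (rule sum.swap)
    also have "\<dots> = 0"
    proof (cases "r = R")
      case True thus ?thesis using zb that by (simp add: c_def)
    next
      case False thus ?thesis using z that by simp
    qed
    finally show ?thesis .
  qed
  ultimately show ?case by blast
qed

definition kchain :: "nat \<Rightarrow> ('n set \<Rightarrow> 'a::zero) \<Rightarrow> bool" where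
  "kchain l z \<longleftrightarrow> (\<forall>I. card I \<noteq> l \<longrightarrow> z I = 0)"

definition KExact :: "('n::{finite,linorder} \<Rightarrow> ('n,'k::comm_ring_1) mpoly) \<Rightarrow> bool" where
  "KExact y \<longleftrightarrow> (\<forall>l\<ge>1. \<forall>z. kchain l z \<and> kd y z = (\<lambda>_. 0) \<longrightarrow> (\<exists>w. kchain (Suc l) w \<and> kd y w = z))"

lemma hmt_zero: "hmt (\<lambda>_. 0) = (\<lambda>_. 0)"
  by (rule ext, rule poly_mapping_eqI) (simp add: lookup_hmt)

lemma KExact_Var: "KExact (Var :: 'n::{finite,linorder} \<Rightarrow> ('n,'k::comm_ring_1) mpoly)"
  unfolding KExact_def
proof (intro allI impI, elim conjE)
  fix l :: nat and z :: "'n set \<Rightarrow> ('n,'k) mpoly"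
  assume l: "1 \<le> l" and zc: "kchain l z" and cyc: "kd Var z = (\<lambda>_. 0)"
  have "kchain (Suc l) (hmt z)"
    unfolding kchain_def
  proof (intro allI impI)
    fix J :: "'n set" assume cJ: "card J \<noteq> Suc l"
    show "hmt z J = 0"
    proof (cases "J = {}")
      case True thus ?thesis by (intro poly_mapping_eqI) (simp add: lookup_hmt)
    next
      case False
      hence "card J \<ge> 1" by (simp add: Suc_leI card_gt_0_iff)
      hence "card (J - {Min J}) \<noteq> l" using cJ False by simp
      hence "z (J - {Min J}) = 0" using zc by (simp add: kchain_def)
      thus ?thesis by (intro poly_mapping_eqI) (simp add: lookup_hmt)
    qed
  qed
  moreover have "kd Var (hmt z) = z"
  proof (rule ext, rule poly_mapping_eqI)
    fix J \<alpha>
    have "Poly_Mapping.lookup (kd Var (hmt z) J) \<alpha> + Poly_Mapping.lookup (hmt (kd Var z) J) \<alpha>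
     = (if J = {} \<and> \<alpha> = 0 then 0 else Poly_Mapping.lookup (z J) \<alpha>)" by (rule hmt_identity)
    moreover have "Poly_Mapping.lookup (hmt (kd Var z) J) \<alpha> = 0" unfolding cyc hmt_zero by simp
    moreover have "z {} = 0" using zc l by (simp add: kchain_def)
    ultimately show "Poly_Mapping.lookup (kd Var (hmt z) J) \<alpha> = Poly_Mapping.lookup (z J) \<alpha>"
      by (cases "J = {} \<and> \<alpha> = 0") auto
  qed
  ultimately show "\<exists>w. kchain (Suc l) w \<and> kd Var w = z" by blast
qed

definition Mk :: "('n::{finite,linorder} \<Rightarrow> ('n,'k::comm_ring_1) mpoly) \<Rightarrow> 'n set \<Rightarrow> 'n set \<Rightarrow> ('n,'k) mpoly" where
  "Mk y I' I = (\<Sum>i\<in>-I'. if I = insert i I' then pos_sign I i * y i else 0)"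

lemma kd_Mk: "kd y z I' = (\<Sum>I\<in>UNIV. Mk y I' I * z I)"
proof -
  have "(\<Sum>I\<in>UNIV. Mk y I' I * z I) = (\<Sum>I\<in>UNIV. \<Sum>i\<in>-I'. if I = insert i I' then pos_sign I i * y i * z I else 0)"
    unfolding Mk_def sum_distrib_right by (intro sum.cong refl) simp
  also have "\<dots> = (\<Sum>i\<in>-I'. \<Sum>I\<in>UNIV. if I = insert i I' then pos_sign I i * y i * z I else 0)"
    by (rule sum.swap)
  also have "\<dots> = kd y z I'"
    unfolding kd_def by (intro sum.cong refl) simp
  finally show ?thesis by simp
qed

lemma Mk_card: "Mk y I' I \<noteq> 0 \<Longrightarrow> card I = Suc (card I')"
proof -
  assume "Mk y I' I \<noteq> 0"
  then obtain i where "i \<in> -I'" "(if I = insert i I' then pos_sign I i * y i else 0) \<noteq> 0"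
    unfolding Mk_def by (rule sum.not_neutral_contains_not_neutral)
  hence "i \<notin> I'" "I = insert i I'" by (auto split: if_splits)
  thus ?thesis by simp
qed

lemma Mk_phi:
  assumes ae: "alg_endo \<phi>" shows "\<phi> (Mk y I' I) = Mk (\<lambda>i. \<phi> (y i)) I' I"
  unfolding Mk_def ae_sum[OF ae]
  by (intro sum.cong refl) (simp add: ae_mult[OF ae] ae_pos_sign[OF ae] ae_zero[OF ae])

lemma KExact_base_change:
  fixes \<phi> :: "('n::{finite,linorder}, 'k::comm_ring_1) mpoly \<Rightarrow> ('n, 'k) mpoly"
  assumes ae: "alg_endo \<phi>" and fl: "flat_endo \<phi>" and ex: "KExact y"
  shows "KExact (\<lambda>i. \<phi> (y i))"
  unfolding KExact_def
proof (intro allI impI, elim conjE)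
  fix l :: nat and z :: "'n set \<Rightarrow> ('n,'k) mpoly"
  assume l: "1 \<le> l" and zc: "kchain l z" and cyc: "kd (\<lambda>i. \<phi> (y i)) z = (\<lambda>_. 0)"
  define N where "N = card (UNIV :: 'n set set)"
  obtain e where bij0: "bij_betw e {0..<N} (UNIV :: 'n set set)"
    using ex_bij_betw_nat_finite[of "UNIV :: 'n set set"] unfolding N_def by auto
  hence bij: "bij_betw e {..<N} UNIV" by (simp add: atLeast0LessThan)
  define ei where "ei = the_inv_into {..<N} e"
  have eei: "e (ei I) = I" for I unfolding ei_def using bij by (simp add: f_the_inv_into_f_bij_betw)
  have eiN: "ei I < N" for I
    using bij_betw_the_inv_into[OF bij] unfolding ei_def bij_betw_def by auto
  have eqs: "\<forall>r<N. (\<Sum>i<N. \<phi> (Mk y (e r) (e i)) * z (e i)) = 0"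
  proof (intro allI impI)
    fix r assume "r < N"
    have "(\<Sum>i<N. \<phi> (Mk y (e r) (e i)) * z (e i)) = (\<Sum>i<N. Mk (\<lambda>i. \<phi> (y i)) (e r) (e i) * z (e i))"
      by (simp add: Mk_phi[OF ae])
    also have "\<dots> = (\<Sum>I\<in>UNIV. Mk (\<lambda>i. \<phi> (y i)) (e r) I * z I)"
      by (rule sum.reindex_bij_betw[OF bij])
    also have "\<dots> = kd (\<lambda>i. \<phi> (y i)) z (e r)" by (simp add: kd_Mk)
    finally show "(\<Sum>i<N. \<phi> (Mk y (e r) (e i)) * z (e i)) = 0" using cyc by simp
  qed
  from flat_sys[OF ae fl eqs] obtain k :: nat and a h
    where za: "\<forall>i<N. z (e i) = (\<Sum>j<k. \<phi> (a i j) * h j)"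
      and ma: "\<forall>r<N. \<forall>j<k. (\<Sum>i<N. Mk y (e r) (e i) * a i j) = 0" by blast
  define c where "c = (\<lambda>j I. if card I = l then a (ei I) j else 0)"
  have cc: "kchain l (c j)" for j by (simp add: kchain_def c_def)
  have cz: "kd y (c j) = (\<lambda>_. 0)" if j: "j < k" for j
  proof
    fix I'
    show "kd y (c j) I' = 0"
    proof (cases "Suc (card I') = l")
      case True
      have "kd y (c j) I' = (\<Sum>I\<in>UNIV. Mk y I' I * c j I)" by (rule kd_Mk)
      also have "\<dots> = (\<Sum>I\<in>UNIV. Mk y I' I * a (ei I) j)"
      proof (rule sum.cong[OF refl])
        fix I
        show "Mk y I' I * c j I = Mk y I' I * a (ei I) j"
          using Mk_card[of y I' I] True by (cases "Mk y I' I = 0") (auto simp: c_def)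
      qed
      also have "\<dots> = (\<Sum>i<N. Mk y I' (e i) * a (ei (e i)) j)"
        by (rule sum.reindex_bij_betw[OF bij, symmetric])
      also have "\<dots> = (\<Sum>i<N. Mk y (e (ei I')) (e i) * a i j)"
      proof (rule sum.cong[OF refl])
        fix i assume "i \<in> {..<N}"
        hence "ei (e i) = i" unfolding ei_def using bij
          by (simp add: bij_betw_def the_inv_into_f_f)
        thus "Mk y I' (e i) * a (ei (e i)) j = Mk y (e (ei I')) (e i) * a i j" by (simp add: eei)
      qed
      also have "\<dots> = 0" using ma eiN j by blast
      finally show ?thesis .
    next
      case False
      have "kd y (c j) I' = (\<Sum>I\<in>UNIV. Mk y I' I * c j I)" by (rule kd_Mk)
      also have "\<dots> = 0"
      proof (rule sum.neutral, rule ballI)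
        fix I
        show "Mk y I' I * c j I = 0"
          using Mk_card[of y I' I] False by (cases "Mk y I' I = 0") (auto simp: c_def)
      qed
      finally show ?thesis .
    qed
  qed
  have "\<forall>j. \<exists>w. j < k \<longrightarrow> kchain (Suc l) w \<and> kd y w = c j"
    using ex l cc cz unfolding KExact_def by blast
  then obtain W where W: "\<And>j. j < k \<Longrightarrow> kchain (Suc l) (W j) \<and> kd y (W j) = c j"
    by metis
  define w where "w = (\<lambda>I. \<Sum>j<k. \<phi> (W j I) * h j)"
  have "kchain (Suc l) w"
    unfolding kchain_def w_def
  proof (intro allI impI)
    fix I :: "'n set" assume "card I \<noteq> Suc l"
    hence "\<forall>j<k. W j I = 0" using W by (simp add: kchain_def)
    thus "(\<Sum>j<k. \<phi> (W j I) * h j) = 0" by (simp add: ae_zero[OF ae])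
  qed
  moreover have "kd (\<lambda>i. \<phi> (y i)) w = z"
  proof
    fix I'
    have "kd (\<lambda>i. \<phi> (y i)) w I' = (\<Sum>i\<in>-I'. \<Sum>j<k. pos_sign (insert i I') i * \<phi> (y i) * (\<phi> (W j (insert i I')) * h j))"
      unfolding kd_def w_def by (simp add: sum_distrib_left)
    also have "\<dots> = (\<Sum>j<k. \<Sum>i\<in>-I'. \<phi> (pos_sign (insert i I') i * y i * W j (insert i I')) * h j)"
      by (subst sum.swap) (simp add: ae_mult[OF ae] ae_pos_sign[OF ae] mult.assoc)
    also have "\<dots> = (\<Sum>j<k. \<phi> (kd y (W j) I') * h j)"
      unfolding kd_def by (simp add: ae_sum[OF ae] sum_distrib_right)
    also have "\<dots> = (\<Sum>j<k. \<phi> (c j I') * h j)"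
      using W by simp
    also have "\<dots> = z I'"
    proof (cases "card I' = l")
      case True
      hence "(\<Sum>j<k. \<phi> (c j I') * h j) = (\<Sum>j<k. \<phi> (a (ei I') j) * h j)" by (simp add: c_def)
      also have "\<dots> = z (e (ei I'))" using za eiN by simp
      finally show ?thesis by (simp add: eei)
    next
      case False
      thus ?thesis using zc by (simp add: c_def kchain_def ae_zero[OF ae])
    qed
    finally show "kd (\<lambda>i. \<phi> (y i)) w I' = z I'" .
  qed
  ultimately show "\<exists>w. kchain (Suc l) w \<and> kd (\<lambda>i. \<phi> (y i)) w = z" by blast
qed

abbreviation Y :: "(('n::{finite,linorder}, 'k::comm_ring_1) mpoly \<Rightarrow> ('n, 'k) mpoly) \<Rightarrow> nat \<Rightarrow> 'n \<Rightarrow> ('n, 'k) mpoly" where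
  "Y \<phi> k i \<equiv> (\<phi> ^^ k) (Var i)"

lemma KExact_Y:
  fixes \<phi> :: "('n::{finite,linorder}, 'k::comm_ring_1) mpoly \<Rightarrow> ('n, 'k) mpoly"
  assumes ae: "alg_endo \<phi>" and fl: "flat_endo \<phi>"
  shows "KExact (Y \<phi> k)"
proof (induction k)
  case 0
  have "(\<lambda>i. (\<phi> ^^ 0) (Var i)) = (Var :: 'n \<Rightarrow> ('n,'k) mpoly)" by (simp add: fun_eq_iff)
  thus ?case using KExact_Var by metis
next
  case (Suc k)
  have "KExact (\<lambda>i. \<phi> (Y \<phi> k i))" by (rule KExact_base_change[OF ae fl Suc.IH])
  thus ?case by simp
qed

lemma skmult_lookup:
  fixes \<phi> :: "('n::linorder, 'k::comm_ring_1) mpoly \<Rightarrow> ('n, 'k) mpoly"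
  assumes ae: "alg_endo \<phi>"
  shows "Poly_Mapping.lookup (skmult \<phi> f g) n =
     (\<Sum>i\<le>n. Poly_Mapping.lookup f i * (\<phi> ^^ i) (Poly_Mapping.lookup g (n - i)))"
proof -
  have aei: "alg_endo (\<phi> ^^ i)" for i by (rule alg_endo_funpow[OF ae])
  define T where "T = (\<lambda>i j. Poly_Mapping.lookup f i * (\<phi> ^^ i) (Poly_Mapping.lookup g j))"
  have "Poly_Mapping.lookup (skmult \<phi> f g) n =
     (\<Sum>i\<in>Poly_Mapping.keys f. \<Sum>j\<in>Poly_Mapping.keys g. if i + j = n then T i j else 0)"
    unfolding skmult_def T_def by (simp add: lookup_sum lookup_single when_def)
  also have "\<dots> = (\<Sum>i\<in>Poly_Mapping.keys f. if i \<in> {..n} then T i (n - i) else 0)"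
  proof (rule sum.cong[OF refl])
    fix i
    have "(\<Sum>j\<in>Poly_Mapping.keys g. if i + j = n then T i j else 0)
        = (\<Sum>j\<in>Poly_Mapping.keys g. if i \<le> n then (if j = n - i then T i j else 0) else 0)"
      by (rule sum.cong) auto
    also have "\<dots> = (if i \<le> n then (\<Sum>j\<in>Poly_Mapping.keys g. if j = n - i then T i j else 0) else 0)"
      by simp
    also have "\<dots> = (if i \<in> {..n} then T i (n - i) else 0)"
    proof (cases "n - i \<in> Poly_Mapping.keys g")
      case True thus ?thesis by simp
    next
      case False
      hence "Poly_Mapping.lookup g (n - i) = 0" by (simp add: in_keys_iff)
      thus ?thesis using False by (simp add: T_def ae_zero[OF aei])
    qed
    finally show "(\<Sum>j\<in>Poly_Mapping.keys g. if i + j = n then T i j else 0) = (if i \<in> {..n} then T i (n - i) else 0)" .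
  qed
  also have "\<dots> = (\<Sum>i\<in>Poly_Mapping.keys f \<inter> {..n}. T i (n - i))"
    by (simp add: sum.inter_restrict)
  also have "\<dots> = (\<Sum>i\<in>{..n}. T i (n - i))"
    by (rule sum.mono_neutral_left) (auto simp: T_def in_keys_iff)
  finally show ?thesis by (simp add: T_def)
qed

context
  fixes \<phi> :: "('n::linorder, 'k::comm_ring_1) mpoly \<Rightarrow> ('n, 'k) mpoly"
  assumes ae: "alg_endo \<phi>"
begin

lemma aei: "alg_endo (\<phi> ^^ i)" by (rule alg_endo_funpow[OF ae])

lemma skmult_emb: "Poly_Mapping.lookup (skmult \<phi> f (emb p)) n = Poly_Mapping.lookup f n * (\<phi> ^^ n) p"
proof -
  have "Poly_Mapping.lookup (skmult \<phi> f (emb p)) n =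
     (\<Sum>i\<le>n. if i = n then Poly_Mapping.lookup f i * (\<phi> ^^ i) p else 0)"
    unfolding skmult_lookup[OF ae]
    by (rule sum.cong) (auto simp: emb_def lookup_single when_def ae_zero[OF aei])
  thus ?thesis by simp
qed

lemma skmult_Theta: "Poly_Mapping.lookup (skmult \<phi> f Theta) n = (if n = 0 then 0 else Poly_Mapping.lookup f (n - 1))"
proof -
  have "Poly_Mapping.lookup (skmult \<phi> f Theta) n =
     (\<Sum>i\<le>n. if Suc i = n then Poly_Mapping.lookup f i else 0)"
    unfolding skmult_lookup[OF ae]
    by (rule sum.cong) (auto simp: Theta_def lookup_single when_def ae_zero[OF aei] ae_one[OF aei])
  also have "\<dots> = (if n = 0 then 0 else Poly_Mapping.lookup f (n - 1))"
  proof (cases n)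
    case 0 thus ?thesis by simp
  next
    case (Suc m)
    have "(\<Sum>i\<le>n. if Suc i = n then Poly_Mapping.lookup f i else 0) = (\<Sum>i\<le>n. if i = m then Poly_Mapping.lookup f i else 0)"
      using Suc by (intro sum.cong) auto
    thus ?thesis using Suc by simp
  qed
  finally show ?thesis .
qed

lemma skmult_add: "Poly_Mapping.lookup (skmult \<phi> f (g + h)) n =
   Poly_Mapping.lookup (skmult \<phi> f g) n + Poly_Mapping.lookup (skmult \<phi> f h) n"
  unfolding skmult_lookup[OF ae] by (simp add: lookup_add ae_add[OF aei] distrib_left sum.distrib)

lemma skmult_uminus: "Poly_Mapping.lookup (skmult \<phi> f (- g)) n = - Poly_Mapping.lookup (skmult \<phi> f g) n"
  unfolding skmult_lookup[OF ae] by (simp add: ae_uminus[OF aei] sum_negf)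

lemma skmult_diff: "Poly_Mapping.lookup (skmult \<phi> f (g - h)) n =
   Poly_Mapping.lookup (skmult \<phi> f g) n - Poly_Mapping.lookup (skmult \<phi> f h) n"
  unfolding skmult_lookup[OF ae] by (simp add: lookup_minus ae_diff[OF aei] right_diff_distrib sum_subtractf)

lemma skmult_zero: "Poly_Mapping.lookup (skmult \<phi> f 0) n = 0"
  unfolding skmult_lookup[OF ae] by (simp add: ae_zero[OF aei])

lemma skmult_sum: "Poly_Mapping.lookup (skmult \<phi> f (sum g A)) n = (\<Sum>x\<in>A. Poly_Mapping.lookup (skmult \<phi> f (g x)) n)"
  unfolding skmult_lookup[OF ae] by (simp add: lookup_sum ae_sum[OF aei] sum_distrib_left) (rule sum.swap)

lemma skmult_if: "Poly_Mapping.lookup (skmult \<phi> f (if P then g else 0)) n = (if P then Poly_Mapping.lookup (skmult \<phi> f g) n else 0)"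
  by (simp add: skmult_zero)

end

definition sprod :: "('n \<Rightarrow> ('n, 'k::comm_ring_1) mpoly) \<Rightarrow> 'n set \<Rightarrow> ('n, 'k) mpoly" where
  "sprod s I = (\<Prod>j\<in>I. s j)"

definition sgnI :: "'n set \<Rightarrow> ('n, 'k::comm_ring_1) mpoly" where
  "sgnI I = (if even (card I) then 1 else -1)"

lemma sum_remove_swap:
  fixes F :: "'n::finite set \<Rightarrow> 'n \<Rightarrow> 'a::comm_monoid_add"
  shows "(\<Sum>I\<in>UNIV. \<Sum>i\<in>I. if I' = I - {i} then F I i else 0) = (\<Sum>i\<in>-I'. F (insert i I') i)"
proof -
  have "(\<Sum>I\<in>UNIV. \<Sum>i\<in>I. if I' = I - {i} then F I i else 0)
      = (\<Sum>I\<in>UNIV. \<Sum>i\<in>UNIV. if i \<in> I \<and> I' = I - {i} then F I i else 0)"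
  proof (rule sum.cong[OF refl])
    fix I :: "'n set"
    have "(\<Sum>i\<in>UNIV. if i \<in> I \<and> I' = I - {i} then F I i else 0) = (\<Sum>i\<in>UNIV. if i \<in> I then (if I' = I - {i} then F I i else 0) else 0)"
      by (rule sum.cong) auto
    also have "\<dots> = (\<Sum>i\<in>I. if I' = I - {i} then F I i else 0)"
      by (simp add: sum.If_cases)
    finally show "(\<Sum>i\<in>I. if I' = I - {i} then F I i else 0) = (\<Sum>i\<in>UNIV. if i \<in> I \<and> I' = I - {i} then F I i else 0)" by simp
  qed
  also have "\<dots> = (\<Sum>i\<in>UNIV. \<Sum>I\<in>UNIV. if i \<in> I \<and> I' = I - {i} then F I i else 0)"
    by (rule sum.swap)
  also have "\<dots> = (\<Sum>i\<in>UNIV. if i \<in> -I' then F (insert i I') i else 0)"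
  proof (rule sum.cong[OF refl])
    fix i
    have "(\<Sum>I\<in>UNIV. if i \<in> I \<and> I' = I - {i} then F I i else 0)
        = (\<Sum>I\<in>UNIV. if i \<in> -I' then (if I = insert i I' then F I i else 0) else 0)"
      by (rule sum.cong) auto
    thus "(\<Sum>I\<in>UNIV. if i \<in> I \<and> I' = I - {i} then F I i else 0) = (if i \<in> -I' then F (insert i I') i else 0)"
      by simp
  qed
  also have "\<dots> = (\<Sum>i\<in>-I'. F (insert i I') i)"
    using sum.inter_restrict[of UNIV "\<lambda>i. F (insert i I') i" "-I'"] by simp
  finally show ?thesis .
qed

lemma sum_pair_bool:
  fixes g :: "'n::finite set \<times> bool \<Rightarrow> 'a::comm_monoid_add"
  shows "(\<Sum>B\<in>UNIV. g B) = (\<Sum>I\<in>UNIV. g (I, False)) + (\<Sum>J\<in>UNIV. g (J, True))"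
proof -
  have "(\<Sum>B\<in>UNIV. g B) = (\<Sum>B\<in>UNIV \<times> UNIV. g B)" by simp
  also have "\<dots> = (\<Sum>I\<in>UNIV. \<Sum>b\<in>UNIV. g (I, b))"
    by (simp add: sum.cartesian_product split_def)
  also have "\<dots> = (\<Sum>I\<in>UNIV. g (I, False) + g (I, True))"
    by (simp add: UNIV_bool add.commute)
  finally show ?thesis by (simp add: sum.distrib)
qed

context
  fixes \<phi> :: "('n::{finite,linorder}, 'k::comm_ring_1) mpoly \<Rightarrow> ('n, 'k) mpoly"
  assumes ae: "alg_endo \<phi>"
begin

lemma skmult_bdsum:
  "Poly_Mapping.lookup (skmult \<phi> f (\<Sum>i\<in>I. if I' = I - {i} then emb (pos_sign I i * q i) else 0)) k
   = (\<Sum>i\<in>I. if I' = I - {i} then pos_sign I i * (\<phi> ^^ k) (q i) * Poly_Mapping.lookup f k else 0)"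
  unfolding skmult_sum[OF ae]
proof (rule sum.cong[OF refl])
  fix i
  show "Poly_Mapping.lookup (skmult \<phi> f (if I' = I - {i} then emb (pos_sign I i * q i) else 0)) k =
    (if I' = I - {i} then pos_sign I i * (\<phi> ^^ k) (q i) * Poly_Mapping.lookup f k else 0)"
    by (cases "I' = I - {i}") (simp_all add: skmult_zero[OF ae] skmult_emb[OF ae] ae_mult[OF aei[OF ae]]
            ae_pos_sign[OF aei[OF ae]] mult.commute mult.left_commute)
qed

lemma dd_lookup_F:
  "Poly_Mapping.lookup (dd \<phi> s c (I', False)) k =
     kd (Y \<phi> k) (\<lambda>I. Poly_Mapping.lookup (c (I, False)) k) I'
     + sgnI I' * ((if k = 0 then 0 else Poly_Mapping.lookup (c (I', True)) (k - 1))
                  - Poly_Mapping.lookup (c (I', True)) k * (\<phi> ^^ k) (sprod s I'))"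
proof -
  have P1: "(\<Sum>I\<in>UNIV. Poly_Mapping.lookup (skmult \<phi> (c (I, False)) (bd \<phi> s (I, False) (I', False))) k)
      = kd (Y \<phi> k) (\<lambda>I. Poly_Mapping.lookup (c (I, False)) k) I'"
  proof -
    have "(\<Sum>I\<in>UNIV. Poly_Mapping.lookup (skmult \<phi> (c (I, False)) (bd \<phi> s (I, False) (I', False))) k)
      = (\<Sum>I\<in>UNIV. \<Sum>i\<in>I. if I' = I - {i} then pos_sign I i * Y \<phi> k i * Poly_Mapping.lookup (c (I, False)) k else 0)"
      by (simp add: skmult_bdsum)
    also have "\<dots> = kd (Y \<phi> k) (\<lambda>I. Poly_Mapping.lookup (c (I, False)) k) I'"
      unfolding kd_def by (rule sum_remove_swap)
    finally show ?thesis .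
  qed
  have P2: "(\<Sum>J\<in>UNIV. Poly_Mapping.lookup (skmult \<phi> (c (J, True)) (bd \<phi> s (J, True) (I', False))) k)
      = sgnI I' * ((if k = 0 then 0 else Poly_Mapping.lookup (c (I', True)) (k - 1))
                  - Poly_Mapping.lookup (c (I', True)) k * (\<phi> ^^ k) (sprod s I'))"
  proof -
    have "(\<Sum>J\<in>UNIV. Poly_Mapping.lookup (skmult \<phi> (c (J, True)) (bd \<phi> s (J, True) (I', False))) k)
       = (\<Sum>J\<in>UNIV. if J = I' then sgnI I' * ((if k = 0 then 0 else Poly_Mapping.lookup (c (I', True)) (k - 1))
                  - Poly_Mapping.lookup (c (I', True)) k * (\<phi> ^^ k) (sprod s I')) else 0)"
    proof (rule sum.cong[OF refl])
      fix J
      show "Poly_Mapping.lookup (skmult \<phi> (c (J, True)) (bd \<phi> s (J, True) (I', False))) k =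
         (if J = I' then sgnI I' * ((if k = 0 then 0 else Poly_Mapping.lookup (c (I', True)) (k - 1))
                  - Poly_Mapping.lookup (c (I', True)) k * (\<phi> ^^ k) (sprod s I')) else 0)"
        by (auto simp: skmult_zero[OF ae] skmult_uminus[OF ae] skmult_diff[OF ae] skmult_Theta[OF ae]
             skmult_emb[OF ae] sgnI_def sprod_def)
    qed
    thus ?thesis by simp
  qed
  show ?thesis
    unfolding dd_def lookup_sum sum_pair_bool[where g = "\<lambda>B. Poly_Mapping.lookup (skmult \<phi> (c B) (bd \<phi> s B (I', False))) k"]
    using P1 P2 by simp
qed

lemma dd_lookup_T:
  "Poly_Mapping.lookup (dd \<phi> s c (J', True)) k = kd (Y \<phi> (Suc k)) (\<lambda>J. Poly_Mapping.lookup (c (J, True)) k) J'"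
proof -
  have P1: "(\<Sum>I\<in>UNIV. Poly_Mapping.lookup (skmult \<phi> (c (I, False)) (bd \<phi> s (I, False) (J', True))) k) = 0"
    by (simp add: skmult_zero[OF ae])
  have P2: "(\<Sum>J\<in>UNIV. Poly_Mapping.lookup (skmult \<phi> (c (J, True)) (bd \<phi> s (J, True) (J', True))) k)
      = kd (Y \<phi> (Suc k)) (\<lambda>J. Poly_Mapping.lookup (c (J, True)) k) J'"
  proof -
    have e: "(\<phi> ^^ k) (\<phi> (Var j)) = Y \<phi> (Suc k) j" for j by (simp only: funpow_Suc_right comp_apply)
    have "(\<Sum>J\<in>UNIV. Poly_Mapping.lookup (skmult \<phi> (c (J, True)) (bd \<phi> s (J, True) (J', True))) k)
      = (\<Sum>J\<in>UNIV. \<Sum>j\<in>J. if J' = J - {j} then pos_sign J j * Y \<phi> (Suc k) j * Poly_Mapping.lookup (c (J, True)) k else 0)"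
      by (simp only: bd.simps if_True skmult_bdsum e)
    also have "\<dots> = kd (Y \<phi> (Suc k)) (\<lambda>J. Poly_Mapping.lookup (c (J, True)) k) J'"
      unfolding kd_def by (rule sum_remove_swap)
    finally show ?thesis .
  qed
  show ?thesis
    unfolding dd_def lookup_sum sum_pair_bool[where g = "\<lambda>B. Poly_Mapping.lookup (skmult \<phi> (c B) (bd \<phi> s B (J', True))) k"]
    using P1 P2 by simp
qed

end

lemma kd_zero: "kd y (\<lambda>_. 0) = (\<lambda>_. 0)"
  by (simp add: kd_def fun_eq_iff)

lemma kd_diff: "kd y (\<lambda>I. f I - g I) J = kd y f J - kd y g J"
  by (simp add: kd_def right_diff_distrib sum_subtractf)

lemma kd_scale: "kd y (\<lambda>I. c * f I) J = c * kd y f J"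
  by (simp add: kd_def sum_distrib_left mult.commute mult.left_commute)

lemma kd_kchain_zero: "kchain m z \<Longrightarrow> Suc (card J) \<noteq> m \<Longrightarrow> kd y z J = 0"
  unfolding kd_def kchain_def by (intro sum.neutral) auto

lemma kd_kchain: "kchain (Suc m) z \<Longrightarrow> kchain m (kd y z)"
  unfolding kchain_def using kd_kchain_zero[unfolded kchain_def] by (metis Suc_inject)

lemma sgnI_insert: "i \<notin> (J::'n::finite set) \<Longrightarrow> sgnI (insert i J) = - (sgnI J :: ('n,'k::comm_ring_1) mpoly)"
  by (simp add: sgnI_def)

lemma sprod_insert: "i \<notin> (J::'n::finite set) \<Longrightarrow> sprod s (insert i J) = s i * sprod s J"
  by (simp add: sprod_def)

lemma pos_sign_single: "pos_sign {i} i = (1::('n::linorder,'k::comm_ring_1) mpoly)"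
proof -
  have "{j\<in>{i}. j < i} = {}" by auto
  thus ?thesis unfolding pos_sign_def by (simp only: card.empty power_0)
qed

definition sl :: "nat \<Rightarrow> ('n, 'k::comm_ring_1) mpoly" where
  "sl l = (if even l then 1 else -1)"

lemma sgnI_kchain: "kchain l X \<Longrightarrow> (\<lambda>I. sgnI I * X I) = (\<lambda>I. sl l * X I)"
  by (auto simp: fun_eq_iff kchain_def sgnI_def sl_def)

lemma sgnI_low: "Suc (card J) = l \<Longrightarrow> sgnI J = - (sl l :: ('n,'k::comm_ring_1) mpoly)"
  by (auto simp: sgnI_def sl_def)

context
  fixes \<phi> :: "('n::{finite,linorder}, 'k::comm_ring_1) mpoly \<Rightarrow> ('n, 'k) mpoly"
    and s :: "'n \<Rightarrow> ('n, 'k) mpoly"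
  assumes ae: "alg_endo \<phi>" and sdef: "\<forall>i. \<phi> (Var i) = s i * Var i"
begin

lemma Y_Suc: "Y \<phi> (Suc k) i = (\<phi> ^^ k) (s i) * Y \<phi> k i"
proof -
  have "Y \<phi> (Suc k) i = (\<phi> ^^ k) (\<phi> (Var i))" by (simp only: funpow_Suc_right comp_apply)
  also have "\<dots> = (\<phi> ^^ k) (s i) * Y \<phi> k i" using sdef by (simp add: ae_mult[OF aei[OF ae]])
  finally show ?thesis .
qed

lemma Y_Suc': "\<phi> ((\<phi> ^^ k) (Var i)) = (\<phi> ^^ k) (s i) * (\<phi> ^^ k) (Var i)"
  using Y_Suc[of k i] by simp

lemma kd_sprod:
  "kd (Y \<phi> k) (\<lambda>I. \<beta> I * (\<phi> ^^ k) (sprod s I)) J = (\<phi> ^^ k) (sprod s J) * kd (Y \<phi> (Suc k)) \<beta> J"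
  unfolding kd_def sum_distrib_left
proof (rule sum.cong[OF refl])
  fix i assume "i \<in> -J"
  hence "sprod s (insert i J) = s i * sprod s J" by (simp add: sprod_insert)
  thus "pos_sign (insert i J) i * Y \<phi> k i * (\<beta> (insert i J) * (\<phi> ^^ k) (sprod s (insert i J))) =
    (\<phi> ^^ k) (sprod s J) * (pos_sign (insert i J) i * Y \<phi> (Suc k) i * \<beta> (insert i J))"
    by (simp add: Y_Suc' ae_mult[OF aei[OF ae]] mult.commute mult.left_commute)
qed

lemma ideal_step:
  assumes "b1 = (\<Sum>i\<in>UNIV. cf i * Y \<phi> (Suc (Suc k)) i)"
    and "kd (Y \<phi> (Suc k)) a1 {} + (b0 - b1 * (\<phi> ^^ Suc k) 1) = 0"
  shows "\<exists>cf'. b0 = (\<Sum>i\<in>UNIV. cf' i * Y \<phi> (Suc k) i)"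
proof -
  have kd0: "kd (Y \<phi> (Suc k)) a1 {} = (\<Sum>i\<in>UNIV. a1 {i} * Y \<phi> (Suc k) i)"
    by (simp add: kd_def pos_sign_single mult.commute)
  have b1: "b1 = (\<Sum>i\<in>UNIV. (cf i * (\<phi> ^^ Suc k) (s i)) * Y \<phi> (Suc k) i)"
    using assms(1) by (simp only: Y_Suc[of "Suc k"] mult.assoc)
  have "b0 = b1 - kd (Y \<phi> (Suc k)) a1 {}"
    using assms(2) by (simp add: ae_one[OF aei[OF ae]] ae_one[OF ae] algebra_simps)
  also have "\<dots> = (\<Sum>i\<in>UNIV. (cf i * (\<phi> ^^ Suc k) (s i) - a1 {i}) * Y \<phi> (Suc k) i)"
    unfolding b1 kd0 by (simp add: left_diff_distrib sum_subtractf)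
  finally show ?thesis by (intro exI[of _ "\<lambda>i. cf i * (\<phi> ^^ Suc k) (s i) - a1 {i}"])
qed

end

lemma lookup_sum_single:
  fixes M :: nat
  shows "Poly_Mapping.lookup (\<Sum>j<M. Poly_Mapping.single j (f j)) k = (if k < M then f k else 0)"
proof -
  have "Poly_Mapping.lookup (\<Sum>j<M. Poly_Mapping.single j (f j)) k = (\<Sum>j\<in>{..<M}. if j = k then f j else 0)"
    unfolding lookup_sum by (intro sum.cong) (auto simp: lookup_single when_def)
  also have "\<dots> = (if k < M then f k else 0)" by (subst sum.delta) auto
  finally show ?thesis .
qed

lemma exact_part:
  fixes \<phi> :: "('n::{finite,linorder}, 'k::comm_ring_1) mpoly \<Rightarrow> ('n, 'k) mpoly"
    and s :: "'n \<Rightarrow> ('n, 'k) mpoly"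
  assumes ae: "alg_endo \<phi>" and fl: "flat_endo \<phi>" and sdef: "\<forall>i. \<phi> (Var i) = s i * Var i"
    and l1: "1 \<le> l" and cc: "chain_in l c" and cyc: "dd \<phi> s c = (\<lambda>_. 0)"
  shows "\<exists>d. chain_in (l + 1) d \<and> dd \<phi> s d = c"
proof -
  define a where "a = (\<lambda>k I. Poly_Mapping.lookup (c (I, False)) k)"
  define b where "b = (\<lambda>k J. Poly_Mapping.lookup (c (J, True)) k)"
  have ak: "kchain l (a k)" for k
    using cc by (auto simp: kchain_def chain_in_def kdeg_def a_def)
  have bk: "kchain (l - 1) (b k)" for k
  proof -
    have "c (J, True) = 0" if "card J \<noteq> l - 1" for J
      using cc that l1 by (auto simp: chain_in_def kdeg_def)
    thus ?thesis by (auto simp: kchain_def b_def)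
  qed
  have C1: "kd (Y \<phi> (Suc k)) (b k) = (\<lambda>_. 0)" for k
  proof
    fix J'
    have "Poly_Mapping.lookup (dd \<phi> s c (J', True)) k = 0" using cyc by simp
    thus "kd (Y \<phi> (Suc k)) (b k) J' = 0" by (simp add: dd_lookup_T[OF ae] b_def)
  qed
  have C2: "kd (Y \<phi> k) (a k) I' + sgnI I' * ((if k = 0 then 0 else b (k - 1) I') - b k I' * (\<phi> ^^ k) (sprod s I')) = 0" for k I'
  proof -
    have "Poly_Mapping.lookup (dd \<phi> s c (I', False)) k = 0" using cyc by simp
    thus ?thesis by (simp only: dd_lookup_F[OF ae] a_def b_def)
  qed
  have "finite (\<Union>B. Poly_Mapping.keys (c B))" by simp
  then obtain K where K: "(\<Union>B. Poly_Mapping.keys (c B)) \<subseteq> {..<K}"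
    by (metis Max_ge lessThan_iff less_Suc_eq_le subsetI)
  have cK: "K \<le> k \<Longrightarrow> Poly_Mapping.lookup (c B') k = 0" for k B'
  proof (rule ccontr)
    assume "K \<le> k" "Poly_Mapping.lookup (c B') k \<noteq> 0"
    hence "k \<in> Poly_Mapping.keys (c B')" by (simp add: in_keys_iff)
    hence "k \<in> (\<Union>B. Poly_Mapping.keys (c B))" by blast
    hence "k < K" using K by blast
    thus False using \<open>K \<le> k\<close> by simp
  qed
  have aK: "K \<le> k \<Longrightarrow> a k = (\<lambda>_. 0)" for k
    using cK by (auto simp: a_def fun_eq_iff)
  have bK: "K \<le> k \<Longrightarrow> b k = (\<lambda>_. 0)" for k
    using cK by (auto simp: b_def fun_eq_iff)
  have beta_ex: "\<exists>\<beta>. kchain l \<beta> \<and> kd (Y \<phi> (Suc k)) \<beta> = b k \<and> (K \<le> k \<longrightarrow> \<beta> = (\<lambda>_. 0))" for k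
  proof (cases "K \<le> k")
    case True
    thus ?thesis using bK[OF True] kd_zero by (auto simp: kchain_def)
  next
    case False
    show ?thesis
    proof (cases "l = 1")
      case l2: False
      have "KExact (Y \<phi> (Suc k))" by (rule KExact_Y[OF ae fl])
      moreover have "1 \<le> l - 1" using l1 l2 by simp
      ultimately obtain w where "kchain (Suc (l - 1)) w" "kd (Y \<phi> (Suc k)) w = b k"
        using bk[of k] C1[of k] unfolding KExact_def by blast
      moreover have "Suc (l - 1) = l" using l1 by simp
      ultimately show ?thesis using False by auto
    next
      case l2: True
      have ideal: "\<exists>cf. b k {} = (\<Sum>i\<in>UNIV. cf i * Y \<phi> (Suc k) i)" for k
      proof -
        have "\<forall>k. K \<le> k + m \<longrightarrow> (\<exists>cf. b k {} = (\<Sum>i\<in>UNIV. cf i * Y \<phi> (Suc k) i))" for m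
        proof (induction m)
          case 0
          show ?case
          proof (intro allI impI)
            fix k assume "K \<le> k + 0"
            hence "b k {} = (\<Sum>i\<in>UNIV. 0 * Y \<phi> (Suc k) i)" using bK by simp
            thus "\<exists>cf. b k {} = (\<Sum>i\<in>UNIV. cf i * Y \<phi> (Suc k) i)" by (intro exI[of _ "\<lambda>_. 0"])
          qed
        next
          case (Suc m)
          show ?case
          proof (intro allI impI)
            fix k assume km: "K \<le> k + Suc m"
            show "\<exists>cf. b k {} = (\<Sum>i\<in>UNIV. cf i * Y \<phi> (Suc k) i)"
            proof (cases "K \<le> k + m")
              case True thus ?thesis using Suc.IH by blast
            next
              case False
              hence "K \<le> Suc k + m" using km by simp
              then obtain cf where cf: "b (Suc k) {} = (\<Sum>i\<in>UNIV. cf i * Y \<phi> (Suc (Suc k)) i)"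
                using Suc.IH by blast
              have "kd (Y \<phi> (Suc k)) (a (Suc k)) {} + (b k {} - b (Suc k) {} * (\<phi> ^^ Suc k) 1) = 0"
                using C2[of "Suc k" "{}"] by (simp add: sgnI_def sprod_def)
              thus ?thesis by (rule ideal_step[OF ae sdef cf])
            qed
          qed
        qed
        from this[of K] show ?thesis by simp
      qed
      obtain cf where cf: "b k {} = (\<Sum>i\<in>UNIV. cf i * Y \<phi> (Suc k) i)" using ideal by blast
      define \<beta> where "\<beta> = (\<lambda>J. if card J = 1 then cf (the_elem J) else 0)"
      have "kchain l \<beta>" using l2 by (simp add: kchain_def \<beta>_def)
      moreover have "kd (Y \<phi> (Suc k)) \<beta> = b k"
      proof
        fix J'
        show "kd (Y \<phi> (Suc k)) \<beta> J' = b k J'"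
        proof (cases "J' = {}")
          case True
          have "kd (Y \<phi> (Suc k)) \<beta> J' = (\<Sum>i\<in>UNIV. Y \<phi> (Suc k) i * cf i)"
            using True by (simp add: kd_def pos_sign_single \<beta>_def)
          thus ?thesis using True cf by (simp add: mult.commute)
        next
          case J'ne: False
          have "kd (Y \<phi> (Suc k)) \<beta> J' = 0"
            unfolding kd_def
          proof (rule sum.neutral, rule ballI)
            fix i assume "i \<in> -J'"
            hence "card (insert i J') = Suc (card J')" by simp
            moreover have "card J' \<noteq> 0" using J'ne by simp
            ultimately have "\<beta> (insert i J') = 0" by (simp add: \<beta>_def)
            thus "pos_sign (insert i J') i * Y \<phi> (Suc k) i * \<beta> (insert i J') = 0" by simp
          qed
          moreover have "b k J' = 0" using bk l2 J'ne by (simp add: kchain_def)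
          ultimately show ?thesis by simp
        qed
      qed
      ultimately show ?thesis using False by blast
    qed
  qed
  define B where "B = (\<lambda>k. SOME \<beta>. kchain l \<beta> \<and> kd (Y \<phi> (Suc k)) \<beta> = b k \<and> (K \<le> k \<longrightarrow> \<beta> = (\<lambda>_. 0)))"
  have B: "\<And>k. kchain l (B k) \<and> kd (Y \<phi> (Suc k)) (B k) = b k \<and> (K \<le> k \<longrightarrow> B k = (\<lambda>_. 0))"
    unfolding B_def by (rule someI_ex[OF beta_ex])
  define Bm where "Bm = (\<lambda>k. if k = 0 then (\<lambda>_. 0) else B (k - 1))"
  have Bmc: "kchain l (Bm k)" for k using B by (simp add: Bm_def kchain_def)
  have Bmd: "kd (Y \<phi> k) (Bm k) J = (if k = 0 then 0 else b (k - 1) J)" for k J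
  proof (cases k)
    case 0 thus ?thesis by (simp add: Bm_def kd_zero)
  next
    case (Suc k') thus ?thesis using B[of k'] by (simp add: Bm_def)
  qed
  define X where "X = (\<lambda>k I. Bm k I - B k I * (\<phi> ^^ k) (sprod s I))"
  have Xc: "kchain l (X k)" for k using B Bmc by (simp add: X_def kchain_def)
  define a' where "a' = (\<lambda>k I. a k I - sgnI I * X k I)"
  have a'c: "kchain l (a' k)" for k using ak Xc by (simp add: a'_def kchain_def)
  have a'cyc: "kd (Y \<phi> k) (a' k) = (\<lambda>_. 0)" for k
  proof
    fix J
    show "kd (Y \<phi> k) (a' k) J = 0"
    proof (cases "Suc (card J) = l")
      case False thus ?thesis by (rule kd_kchain_zero[OF a'c])
    next
      case True
      have "kd (Y \<phi> k) (a' k) J = kd (Y \<phi> k) (a k) J - kd (Y \<phi> k) (\<lambda>I. sgnI I * X k I) J"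
        unfolding a'_def by (rule kd_diff)
      also have "kd (Y \<phi> k) (\<lambda>I. sgnI I * X k I) J = sl l * kd (Y \<phi> k) (X k) J"
        unfolding sgnI_kchain[OF Xc] by (rule kd_scale)
      also have "kd (Y \<phi> k) (X k) J = (if k = 0 then 0 else b (k - 1) J) - (\<phi> ^^ k) (sprod s J) * b k J"
        unfolding X_def kd_diff kd_sprod[OF ae sdef] Bmd using B by simp
      also have "kd (Y \<phi> k) (a k) J = - sgnI J * ((if k = 0 then 0 else b (k - 1) J) - b k J * (\<phi> ^^ k) (sprod s J))"
        using C2[of k J] by (simp add: algebra_simps)
      finally have eq: "kd (Y \<phi> k) (a' k) J = - sgnI J * ((if k = 0 then 0 else b (k - 1) J) - b k J * (\<phi> ^^ k) (sprod s J)) -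
         sl l * ((if k = 0 then 0 else b (k - 1) J) - (\<phi> ^^ k) (sprod s J) * b k J)" .
      show ?thesis using eq[unfolded sgnI_low[OF True]] by (simp add: algebra_simps)
    qed
  qed
  have alpha_ex: "\<exists>\<alpha>. kchain (Suc l) \<alpha> \<and> kd (Y \<phi> k) \<alpha> = a' k \<and> (Suc K \<le> k \<longrightarrow> \<alpha> = (\<lambda>_. 0))" for k
  proof (cases "Suc K \<le> k")
    case True
    have "a' k = (\<lambda>_. 0)"
      using True aK[of k] B[of k] B[of "k - 1"] by (simp add: a'_def X_def Bm_def fun_eq_iff)
    thus ?thesis by (intro exI[of _ "\<lambda>_. 0"]) (simp add: kchain_def kd_zero)
  next
    case False
    have "KExact (Y \<phi> k)" by (rule KExact_Y[OF ae fl])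
    then obtain w where "kchain (Suc l) w" "kd (Y \<phi> k) w = a' k"
      using a'c[of k] a'cyc[of k] l1 unfolding KExact_def by blast
    thus ?thesis using False by blast
  qed
  define A where "A = (\<lambda>k. SOME \<alpha>. kchain (Suc l) \<alpha> \<and> kd (Y \<phi> k) \<alpha> = a' k \<and> (Suc K \<le> k \<longrightarrow> \<alpha> = (\<lambda>_. 0)))"
  have A: "\<And>k. kchain (Suc l) (A k) \<and> kd (Y \<phi> k) (A k) = a' k \<and> (Suc K \<le> k \<longrightarrow> A k = (\<lambda>_. 0))"
    unfolding A_def by (rule someI_ex[OF alpha_ex])
  define M where "M = Suc (Suc K)"
  define d where "d = (\<lambda>(I, t). if t then (\<Sum>j<M. Poly_Mapping.single j (B j I))
                                   else (\<Sum>j<M. Poly_Mapping.single j (A j I)))"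
  have dF: "Poly_Mapping.lookup (d (I, False)) k = A k I" for I k
  proof -
    have "k \<ge> M \<Longrightarrow> A k I = 0" using A[of k] by (simp add: M_def)
    thus ?thesis by (auto simp: d_def lookup_sum_single)
  qed
  have dT: "Poly_Mapping.lookup (d (J, True)) k = B k J" for J k
  proof -
    have "k \<ge> M \<Longrightarrow> B k J = 0" using B[of k] by (simp add: M_def)
    thus ?thesis by (auto simp: d_def lookup_sum_single)
  qed
  have "chain_in (l + 1) d"
    unfolding chain_in_def
  proof (intro allI impI)
    fix B' :: "'n set \<times> bool" assume deg: "kdeg B' \<noteq> l + 1"
    obtain I t where Bt: "B' = (I, t)" by (cases B')
    show "d B' = 0"
    proof (cases t)
      case True
      hence "card I \<noteq> l" using deg Bt by (simp add: kdeg_def)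
      hence "\<And>k. Poly_Mapping.lookup (d B') k = 0" using B Bt True dT by (simp add: kchain_def)
      thus ?thesis by (intro poly_mapping_eqI) simp
    next
      case False
      hence "card I \<noteq> Suc l" using deg Bt by (simp add: kdeg_def)
      hence "\<And>k. Poly_Mapping.lookup (d B') k = 0" using A Bt False dF by (simp add: kchain_def)
      thus ?thesis by (intro poly_mapping_eqI) simp
    qed
  qed
  moreover have "dd \<phi> s d = c"
  proof
    fix B' :: "'n set \<times> bool"
    obtain I t where Bt: "B' = (I, t)" by (cases B')
    show "dd \<phi> s d B' = c B'"
    proof (rule poly_mapping_eqI)
      fix k
      show "Poly_Mapping.lookup (dd \<phi> s d B') k = Poly_Mapping.lookup (c B') k"
      proof (cases t)
        case True
        have "Poly_Mapping.lookup (dd \<phi> s d B') k = kd (Y \<phi> (Suc k)) (B k) I"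
          using Bt True by (simp add: dd_lookup_T[OF ae] dT)
        also have "\<dots> = b k I" using B by simp
        finally show ?thesis using Bt True by (simp add: b_def)
      next
        case False
        have "Poly_Mapping.lookup (dd \<phi> s d B') k = kd (Y \<phi> k) (A k) I + sgnI I * X k I"
          using Bt False by (simp add: dd_lookup_F[OF ae] dF dT X_def Bm_def)
        also have "\<dots> = a k I" using A by (simp add: a'_def)
        finally show ?thesis using Bt False by (simp add: a_def)
      qed
    qed
  qed
  ultimately show ?thesis by blast
qed

definition eps :: "('n, 'k::comm_ring_1) skew \<Rightarrow> ('n, 'k) mpoly" where
  "eps a = (\<Sum>i\<in>Poly_Mapping.keys a. Poly_Mapping.lookup a i)"

lemma eps_superset: "finite S \<Longrightarrow> Poly_Mapping.keys a \<subseteq> S \<Longrightarrow> eps a = (\<Sum>i\<in>S. Poly_Mapping.lookup a i)"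
  unfolding eps_def by (rule sum.mono_neutral_left) (auto simp: in_keys_iff)

lemma eps_add: "eps (a + b) = eps a + eps b"
proof -
  let ?S = "Poly_Mapping.keys a \<union> Poly_Mapping.keys b"
  have "eps (a + b) = (\<Sum>i\<in>?S. Poly_Mapping.lookup (a + b) i)"
    by (rule eps_superset) (auto simp: keys_add)
  also have "\<dots> = (\<Sum>i\<in>?S. Poly_Mapping.lookup a i) + (\<Sum>i\<in>?S. Poly_Mapping.lookup b i)"
    by (simp add: lookup_add sum.distrib)
  also have "\<dots> = eps a + eps b"
    by (simp add: eps_superset[symmetric])
  finally show ?thesis .
qed

lemma eps_zero: "eps 0 = 0" by (simp add: eps_def)

lemma eps_sum: "eps (sum f A) = (\<Sum>x\<in>A. eps (f x))"
  by (induction A rule: infinite_finite_induct) (simp_all add: eps_zero eps_add)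

lemma eps_single: "eps (Poly_Mapping.single n v) = v"
  by (cases "v = 0") (simp_all add: eps_def)

lemma eps_diff: "eps (a - b) = eps a - eps b"
  using eps_add[of "a - b" b] by (simp add: algebra_simps)

lemma eps_uminus: "eps (- a) = - eps a"
  using eps_diff[of 0 a] by (simp add: eps_zero)

lemma eps_emb: "eps (emb p) = p" by (simp add: emb_def eps_single)

lemma eps_Theta: "eps Theta = 1" by (simp add: Theta_def eps_single)

lemma eps_skmult:
  fixes \<phi> :: "('n::linorder, 'k::comm_ring_1) mpoly \<Rightarrow> ('n, 'k) mpoly"
  assumes ae: "alg_endo \<phi>"
  shows "eps (skmult \<phi> r a) = act \<phi> r (eps a)"
proof -
  have "eps (skmult \<phi> r a) = (\<Sum>i\<in>Poly_Mapping.keys r. \<Sum>j\<in>Poly_Mapping.keys a.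
      Poly_Mapping.lookup r i * (\<phi> ^^ i) (Poly_Mapping.lookup a j))"
    by (simp add: skmult_def eps_sum eps_single)
  also have "\<dots> = act \<phi> r (eps a)"
    unfolding act_def eps_def by (simp add: ae_sum[OF aei[OF ae]] sum_distrib_left)
  finally show ?thesis .
qed

lemma in_In_zero: "in_In (0::('n::finite,'k::comm_ring_1) mpoly)"
  unfolding in_In_def by (intro exI[of _ "\<lambda>_. 0"]) simp

lemma in_In_add: "in_In p \<Longrightarrow> in_In q \<Longrightarrow> in_In (p + q)"
  unfolding in_In_def
proof (elim exE)
  fix c d assume "p = (\<Sum>i\<in>UNIV. c i * Var i)" "q = (\<Sum>i\<in>UNIV. d i * Var i)"
  hence "p + q = (\<Sum>i\<in>UNIV. (c i + d i) * Var i)" by (simp add: sum.distrib distrib_right)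
  thus "\<exists>c. p + q = (\<Sum>i\<in>UNIV. c i * Var i)" by (intro exI[of _ "\<lambda>i. c i + d i"])
qed

lemma in_In_mult: "in_In p \<Longrightarrow> in_In (r * p)"
  unfolding in_In_def
proof (elim exE)
  fix c assume "p = (\<Sum>i\<in>UNIV. c i * Var i)"
  hence "r * p = (\<Sum>i\<in>UNIV. (r * c i) * Var i)" by (simp add: sum_distrib_left mult.assoc)
  thus "\<exists>c. r * p = (\<Sum>i\<in>UNIV. c i * Var i)" by (intro exI[of _ "\<lambda>i. r * c i"])
qed

lemma in_In_sum: "(\<And>x. x \<in> A \<Longrightarrow> in_In (f x)) \<Longrightarrow> in_In (sum f A)"
  by (induction A rule: infinite_finite_induct) (simp_all add: in_In_zero in_In_add)

lemma in_In_Var: "in_In (Var i :: ('n::finite,'k::comm_ring_1) mpoly)"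
proof -
  have "(\<Sum>j\<in>UNIV. (if j = i then 1 else 0) * Var j) = (\<Sum>j\<in>UNIV. if j = i then Var j else (0::('n,'k) mpoly))"
    by (rule sum.cong) auto
  also have "\<dots> = Var i" by simp
  finally have e: "(\<Sum>j\<in>UNIV. (if j = i then 1 else 0) * Var j) = (Var i :: ('n,'k) mpoly)" .
  show ?thesis unfolding in_In_def by (rule exI[of _ "\<lambda>j. if j = i then 1 else 0"]) (rule e[symmetric])
qed

lemma in_In_phi:
  fixes \<phi> :: "('n::{finite,linorder}, 'k::comm_ring_1) mpoly \<Rightarrow> ('n, 'k) mpoly"
  assumes ae: "alg_endo \<phi>" and sdef: "\<forall>i. \<phi> (Var i) = s i * Var i"
  shows "in_In p \<Longrightarrow> in_In (\<phi> p)"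
proof -
  assume "in_In p"
  then obtain c where "p = (\<Sum>i\<in>UNIV. c i * Var i)" unfolding in_In_def by blast
  hence "\<phi> p = (\<Sum>i\<in>UNIV. \<phi> (c i) * (s i * Var i))"
    using sdef by (simp add: ae_sum[OF ae] ae_mult[OF ae])
  thus "in_In (\<phi> p)" by (simp add: in_In_sum in_In_mult in_In_Var)
qed

lemma in_In_funpow:
  fixes \<phi> :: "('n::{finite,linorder}, 'k::comm_ring_1) mpoly \<Rightarrow> ('n, 'k) mpoly"
  assumes ae: "alg_endo \<phi>" and sdef: "\<forall>i. \<phi> (Var i) = s i * Var i"
  shows "in_In p \<Longrightarrow> in_In ((\<phi> ^^ k) p)"
  by (induction k) (simp_all add: in_In_phi[OF ae sdef])

lemma in_In_act:
  fixes \<phi> :: "('n::{finite,linorder}, 'k::comm_ring_1) mpoly \<Rightarrow> ('n, 'k) mpoly"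
  assumes ae: "alg_endo \<phi>" and sdef: "\<forall>i. \<phi> (Var i) = s i * Var i"
  shows "in_In p \<Longrightarrow> in_In (act \<phi> r p)"
  unfolding act_def by (intro in_In_sum in_In_mult in_In_funpow[OF ae sdef])

lemma eps_if: "eps (if P then x else 0) = (if P then eps x else 0)"
  by (simp add: eps_zero)

lemma eps_bd_In:
  fixes \<phi> :: "('n::{finite,linorder}, 'k::comm_ring_1) mpoly \<Rightarrow> ('n, 'k) mpoly"
  shows "in_In (eps (bd \<phi> s B ({}, False)))"
proof -
  obtain I t where Bt: "B = (I, t)" by (cases B)
  show ?thesis
  proof (cases t)
    case False
    have "eps (bd \<phi> s B ({}, False)) = (\<Sum>i\<in>I. if {} = I - {i} then pos_sign I i * Var i else 0)"
      using Bt False by (simp only: bd.simps if_False eps_sum eps_if eps_emb)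
    also have "in_In \<dots>"
      by (intro in_In_sum) (simp add: in_In_zero in_In_mult in_In_Var)
    finally show ?thesis .
  next
    case True
    have "eps (bd \<phi> s B ({}, False)) = 0"
      using Bt True by (auto simp: eps_diff eps_uminus eps_Theta eps_emb eps_zero)
    thus ?thesis by (simp add: in_In_zero)
  qed
qed

lemma lookup_e:
  fixes a :: "nat \<Rightarrow>\<^sub>0 'b::comm_monoid_add"
  shows
  "Poly_Mapping.lookup (\<Sum>m\<in>Poly_Mapping.keys a. \<Sum>j<m. Poly_Mapping.single j (Poly_Mapping.lookup a m)) k
    = (\<Sum>m\<in>Poly_Mapping.keys a. if k < m then Poly_Mapping.lookup a m else (0::'b::comm_monoid_add))"
  unfolding lookup_sum
proof (rule sum.cong[OF refl])
  fix m :: nat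
  have "(\<Sum>j<m. Poly_Mapping.lookup (Poly_Mapping.single j (Poly_Mapping.lookup a m)) k)
      = (\<Sum>j\<in>{..<m}. if j = k then Poly_Mapping.lookup a m else 0)"
    by (intro sum.cong) (auto simp: lookup_single when_def)
  also have "\<dots> = (if k < m then Poly_Mapping.lookup a m else 0)" by (subst sum.delta) auto
  finally show "(\<Sum>j<m. Poly_Mapping.lookup (Poly_Mapping.single j (Poly_Mapping.lookup a m)) k)
      = (if k < m then Poly_Mapping.lookup a m else 0)" .
qed

lemma sum_keys_delta: "(\<Sum>m\<in>Poly_Mapping.keys a. if m = k then Poly_Mapping.lookup a m else 0) = Poly_Mapping.lookup a k"
  by (subst sum.delta) (auto simp: in_keys_iff)

lemma eps_part:
  fixes \<phi> :: "('n::{finite,linorder}, 'k::comm_ring_1) mpoly \<Rightarrow> ('n, 'k) mpoly"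
    and s :: "'n \<Rightarrow> ('n, 'k) mpoly"
  assumes ae: "alg_endo \<phi>" and sdef: "\<forall>i. \<phi> (Var i) = s i * Var i"
  shows "in_In (eps a) \<longleftrightarrow> (\<exists>d. chain_in 1 d \<and> dd \<phi> s d ({}, False) = a)"
proof
  assume "\<exists>d. chain_in 1 d \<and> dd \<phi> s d ({}, False) = a"
  then obtain d where "dd \<phi> s d ({}, False) = a" by blast
  hence "eps a = eps (dd \<phi> s d ({}, False))" by simp
  also have "\<dots> = (\<Sum>B\<in>UNIV. act \<phi> (d B) (eps (bd \<phi> s B ({}, False))))"
    unfolding dd_def by (simp add: eps_sum eps_skmult[OF ae])
  also have "in_In \<dots>"
    by (intro in_In_sum in_In_act[OF ae sdef] eps_bd_In)
  finally show "in_In (eps a)" .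
next
  assume "in_In (eps a)"
  then obtain c where c: "eps a = (\<Sum>i\<in>UNIV. c i * Var i)" unfolding in_In_def by blast
  define e where "e = (\<Sum>m\<in>Poly_Mapping.keys a. \<Sum>j<m. Poly_Mapping.single j (Poly_Mapping.lookup a m))"
  define d where "d = (\<lambda>(I, t). if t then (if I = {} then e else 0)
                        else (if card I = 1 then emb (c (the_elem I)) else 0))"
  have "chain_in 1 d"
    by (auto simp: chain_in_def kdeg_def d_def)
  moreover have "dd \<phi> s d ({}, False) = a"
  proof (rule poly_mapping_eqI)
    fix k
    have kd0: "kd (Y \<phi> k) (\<lambda>I. Poly_Mapping.lookup (d (I, False)) k) {} = (if k = 0 then eps a else 0)"
    proof -
      have "kd (Y \<phi> k) (\<lambda>I. Poly_Mapping.lookup (d (I, False)) k) {}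
          = (\<Sum>i\<in>UNIV. Y \<phi> k i * (if k = 0 then c i else 0))"
        by (simp add: kd_def pos_sign_single d_def emb_def lookup_single when_def)
      also have "\<dots> = (if k = 0 then eps a else 0)"
        using c by (simp add: mult.commute)
      finally show ?thesis .
    qed
    have le: "Poly_Mapping.lookup (d ({}, True)) j = (\<Sum>m\<in>Poly_Mapping.keys a. if j < m then Poly_Mapping.lookup a m else 0)" for j
      by (simp add: d_def e_def lookup_e)
    have "Poly_Mapping.lookup (dd \<phi> s d ({}, False)) k =
       (if k = 0 then eps a else 0) + ((if k = 0 then 0 else Poly_Mapping.lookup (d ({}, True)) (k - 1))
          - Poly_Mapping.lookup (d ({}, True)) k)"
      by (simp add: dd_lookup_F[OF ae] kd0 sgnI_def sprod_def ae_one[OF aei[OF ae]])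
    also have "\<dots> = Poly_Mapping.lookup a k"
    proof (cases k)
      case 0
      have "eps a - (\<Sum>m\<in>Poly_Mapping.keys a. if 0 < m then Poly_Mapping.lookup a m else 0)
          = (\<Sum>m\<in>Poly_Mapping.keys a. if m = 0 then Poly_Mapping.lookup a m else 0)"
        unfolding eps_def sum_subtractf[symmetric] by (intro sum.cong) auto
      thus ?thesis using 0 by (simp add: le sum_keys_delta)
    next
      case (Suc k')
      have "(\<Sum>m\<in>Poly_Mapping.keys a. if k' < m then Poly_Mapping.lookup a m else 0)
          - (\<Sum>m\<in>Poly_Mapping.keys a. if Suc k' < m then Poly_Mapping.lookup a m else 0)
          = (\<Sum>m\<in>Poly_Mapping.keys a. if m = Suc k' then Poly_Mapping.lookup a m else 0)"
        unfolding sum_subtractf[symmetric] by (intro sum.cong) auto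
      thus ?thesis using Suc by (simp add: le sum_keys_delta)
    qed
    finally show "Poly_Mapping.lookup (dd \<phi> s d ({}, False)) k = Poly_Mapping.lookup a k" .
  qed
  ultimately show "\<exists>d. chain_in 1 d \<and> dd \<phi> s d ({}, False) = a" by blast
qed

theorem theorem3:
  fixes \<phi> :: "('n::{finite,linorder}, 'k::comm_ring_1) mpoly \<Rightarrow> ('n, 'k) mpoly"
    and s :: "'n \<Rightarrow> ('n, 'k) mpoly"
  assumes endo: "alg_endo \<phi>"
    and flat: "flat_endo \<phi>"
    and in_ideal: "\<forall>i. \<exists>q. \<phi> (Var i) = q * Var i"
    and s_nz: "\<forall>i. s i \<noteq> 0"
    and s_def: "\<forall>i. \<phi> (Var i) = s i * Var i"
  shows "(\<forall>l\<ge>1. \<forall>c. chain_in l c \<and> dd \<phi> s c = (\<lambda>_. 0) \<longrightarrow>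
            (\<exists>d. chain_in (l + 1) d \<and> dd \<phi> s d = c))
       \<and> (\<exists>\<epsilon> :: ('n, 'k) skew \<Rightarrow> ('n, 'k) mpoly.
            (\<forall>a b. in_In (\<epsilon> (a + b) - (\<epsilon> a + \<epsilon> b))) \<and>
            (\<forall>r a. in_In (\<epsilon> (skmult \<phi> r a) - act \<phi> r (\<epsilon> a))) \<and>
            (\<forall>p. \<exists>a. in_In (\<epsilon> a - p)) \<and>
            (\<forall>a. in_In (\<epsilon> a) \<longleftrightarrow>
                 (\<exists>d. chain_in 1 d \<and> dd \<phi> s d ({}, False) = a)))"
proof (intro conjI allI impI)
  fix l :: nat and c
  assume "1 \<le> l" and "chain_in l c \<and> dd \<phi> s c = (\<lambda>_. 0)"
  thus "\<exists>d. chain_in (l + 1) d \<and> dd \<phi> s d = c"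
    using exact_part[OF endo flat s_def] by blast
next
  have P1: "\<forall>a b. in_In (eps (a + b) - (eps a + eps b) :: ('n, 'k) mpoly)"
    by (simp add: eps_add in_In_zero)
  have P2: "\<forall>r a. in_In (eps (skmult \<phi> r a) - act \<phi> r (eps a))"
    by (simp add: eps_skmult[OF endo] in_In_zero)
  have P3: "\<forall>p. \<exists>a. in_In (eps a - p :: ('n, 'k) mpoly)"
  proof
    fix p :: "('n, 'k) mpoly"
    have "in_In (eps (emb p) - p)" by (simp add: eps_emb in_In_zero)
    thus "\<exists>a. in_In (eps a - p)" by blast
  qed
  have P4: "\<forall>a. in_In (eps a) \<longleftrightarrow> (\<exists>d. chain_in 1 d \<and> dd \<phi> s d ({}, False) = a)"
    using eps_part[OF endo s_def] by blast
  show "\<exists>\<epsilon> :: ('n, 'k) skew \<Rightarrow> ('n, 'k) mpoly.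
            (\<forall>a b. in_In (\<epsilon> (a + b) - (\<epsilon> a + \<epsilon> b))) \<and>
            (\<forall>r a. in_In (\<epsilon> (skmult \<phi> r a) - act \<phi> r (\<epsilon> a))) \<and>
            (\<forall>p. \<exists>a. in_In (\<epsilon> a - p)) \<and>
            (\<forall>a. in_In (\<epsilon> a) \<longleftrightarrow>
                 (\<exists>d. chain_in 1 d \<and> dd \<phi> s d ({}, False) = a))"
    using P1 P2 P3 P4 by (intro exI[of _ eps]) blast
qed

end
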